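(* For every integer $n\ge1$, the complete graph $K_{2n}$ is map-rich.
   Context: A map is a triple $M=(C_M,v_M,f_M)$ where $C_M$ is a finite cubic graph (multiple edges allowed) and $v_M,f_M$ are disjoint perfect matchings whose union is a disjoint union of 4-cycles, the squares ($SQ(M)$). $a_M=E(C_M)\setminus(v_M\cup f_M)$; $z_M$ is the matching of square diagonals; $Q_M=C_M\cup z_M$. For a map $X$, $G_X$ has vertices the cycles of $v_X\cup a_X$ and edges the squares, each square joining the cycles containing its two $v_X$-edges. The dual is $D=(C_M,f_M,v_M)$, the phial $P=(Q_M\setminus v_M,z_M,f_M)$; edge sets of $G_M,G_D,G_P$ are identified with $SQ(M)$, and $V,F,Z$ denote their $GF(2)$-coboundary spaces, $V^\perp$ the cycle space of $G_M$. $M$ is rich if $V^\perp=F+Z$. A graph $G$ is map-rich if $G\cong G_M$ for some rich map $M$. *)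

theory Defs
  imports Main
begin

text \<open>A cubic multigraph (multiple edges allowed, no loops) with vertex set nodes, edge set
  edges, and endpoint function ends (each edge has a 2-element set of ends), together with
  the two distinguished edge sets vm (= v_M) and fm (= f_M).\<close>

record ('v, 'e) cmap =
  nodes :: "'v set"
  edges :: "'e set"
  ends  :: "'e \<Rightarrow> 'v set"
  vm    :: "'e set"
  fm    :: "'e set"

definition adj_rel :: "('e \<Rightarrow> 'v set) \<Rightarrow> 'e set \<Rightarrow> ('v \<times> 'v) set" where
  "adj_rel en S = {(x, y). \<exists>e\<in>S. en e = {x, y}}"

definition comp :: "('e \<Rightarrow> 'v set) \<Rightarrow> 'e set \<Rightarrow> 'v \<Rightarrow> 'v set" where
  "comp en S x = {y. (x, y) \<in> (adj_rel en S)\<^sup>*}"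

definition perfect_matching :: "('v, 'e) cmap \<Rightarrow> 'e set \<Rightarrow> bool" where
  "perfect_matching M S \<longleftrightarrow> S \<subseteq> edges M \<and>
     (\<forall>x\<in>nodes M. \<exists>!e. e \<in> S \<and> x \<in> ends M e)"

definition cubic_graph :: "('v, 'e) cmap \<Rightarrow> bool" where
  "cubic_graph M \<longleftrightarrow> finite (nodes M) \<and> finite (edges M) \<and>
     (\<forall>e\<in>edges M. ends M e \<subseteq> nodes M \<and> card (ends M e) = 2) \<and>
     (\<forall>x\<in>nodes M. card {e\<in>edges M. x \<in> ends M e} = 3)"

text \<open>M is a map: v and f disjoint perfect matchings whose union is a disjoint union of
  4-cycles (the union of two disjoint perfect matchings is 2-regular, so this amounts to every
  component of the spanning subgraph v \<union> f having exactly 4 vertices).\<close>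

definition is_map :: "('v, 'e) cmap \<Rightarrow> bool" where
  "is_map M \<longleftrightarrow> cubic_graph M \<and> perfect_matching M (vm M) \<and> perfect_matching M (fm M) \<and>
     vm M \<inter> fm M = {} \<and>
     (\<forall>x\<in>nodes M. card (comp (ends M) (vm M \<union> fm M) x) = 4)"

definition am :: "('v, 'e) cmap \<Rightarrow> 'e set" where
  "am M = edges M - (vm M \<union> fm M)"

definition squares :: "('v, 'e) cmap \<Rightarrow> 'v set set" where
  "squares M = (\<lambda>x. comp (ends M) (vm M \<union> fm M) x) ` nodes M"

text \<open>The diagonals z_M of the squares: pairs of distinct vertices in the same square that are
  not joined by an edge of v \<union> f (i.e. opposite vertices of the 4-cycle).\<close>

definition zdiag :: "('v, 'e) cmap \<Rightarrow> 'v set set" where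
  "zdiag M = {d. \<exists>x\<in>nodes M. \<exists>y. d = {x, y} \<and> y \<noteq> x \<and>
                 y \<in> comp (ends M) (vm M \<union> fm M) x \<and>
                 \<not> (\<exists>e\<in>vm M \<union> fm M. ends M e = {x, y})}"

text \<open>Q_M = C_M \<union> z_M: old edges tagged Inl, diagonals tagged Inr (a diagonal is its own
  set of ends).\<close>

definition qends :: "('v, 'e) cmap \<Rightarrow> 'e + 'v set \<Rightarrow> 'v set" where
  "qends M q = (case q of Inl e \<Rightarrow> ends M e | Inr d \<Rightarrow> d)"

definition dual :: "('v, 'e) cmap \<Rightarrow> ('v, 'e) cmap" where
  "dual M = \<lparr>nodes = nodes M, edges = edges M, ends = ends M, vm = fm M, fm = vm M\<rparr>"

definition phial :: "('v, 'e) cmap \<Rightarrow> ('v, 'e + 'v set) cmap" where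
  "phial M = \<lparr>nodes = nodes M,
              edges = Inl ` (edges M - vm M) \<union> Inr ` zdiag M,
              ends = qends M,
              vm = Inr ` zdiag M,
              fm = Inl ` fm M\<rparr>"

text \<open>A multigraph (loops allowed) given by vertices, edges and an incidence count: ginc e x is
  the number of ends of e at x (2 for a loop).\<close>

record ('a, 'b) mgraph =
  gverts :: "'a set"
  gedges :: "'b set"
  ginc   :: "'b \<Rightarrow> 'a \<Rightarrow> nat"

text \<open>G_X: vertices are (vertex sets of) the cycles of v_X \<union> a_X; edges are the squares of X
  (as vertex sets, which identifies the edge sets of G_M, G_D, G_P with SQ(M)); a square s
  is incident to a cycle K once for each v_X-edge of s lying in K.\<close>

definition Gof :: "('v, 'e) cmap \<Rightarrow> ('v set, 'v set) mgraph" where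
  "Gof X = \<lparr>gverts = (\<lambda>x. comp (ends X) (vm X \<union> am X) x) ` nodes X,
            gedges = squares X,
            ginc = (\<lambda>s K. card {e\<in>vm X. ends X e \<subseteq> s \<and> ends X e \<subseteq> K})\<rparr>"

text \<open>GF(2)-vectors on the edge set are represented as edge subsets (sum = symmetric
  difference). The coboundary of a vertex set U is the set of edges with an odd number of
  ends in U.\<close>

definition coboundary :: "('a, 'b) mgraph \<Rightarrow> 'a set \<Rightarrow> 'b set" where
  "coboundary G U = {e\<in>gedges G. odd (\<Sum>x\<in>U. ginc G e x)}"

definition cob_space :: "('a, 'b) mgraph \<Rightarrow> 'b set set" where
  "cob_space G = {coboundary G U | U. U \<subseteq> gverts G}"

definition orth :: "'b set \<Rightarrow> 'b set set \<Rightarrow> 'b set set" where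
  "orth E W = {S. S \<subseteq> E \<and> (\<forall>T\<in>W. even (card (S \<inter> T)))}"

definition symdiff :: "'b set \<Rightarrow> 'b set \<Rightarrow> 'b set" where
  "symdiff A B = (A - B) \<union> (B - A)"

definition space_sum :: "'b set set \<Rightarrow> 'b set set \<Rightarrow> 'b set set" where
  "space_sum A B = {symdiff a b | a b. a \<in> A \<and> b \<in> B}"

definition rich :: "('v, 'e) cmap \<Rightarrow> bool" where
  "rich M \<longleftrightarrow> is_map M \<and>
     orth (squares M) (cob_space (Gof M)) =
       space_sum (cob_space (Gof (dual M))) (cob_space (Gof (phial M)))"

definition mgraph_iso :: "('a, 'b) mgraph \<Rightarrow> ('c, 'd) mgraph \<Rightarrow> bool" where
  "mgraph_iso G H \<longleftrightarrow> (\<exists>\<phi> \<psi>. bij_betw \<phi> (gverts G) (gverts H) \<and> bij_betw \<psi> (gedges G) (gedges H) \<and>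
     (\<forall>e\<in>gedges G. \<forall>x\<in>gverts G. ginc H (\<psi> e) (\<phi> x) = ginc G e x))"

text \<open>Map-rich: isomorphic to G_M for some rich map M. Vertices and edges of M are labelled by
  natural numbers, which loses no generality since maps are finite.\<close>

definition map_rich :: "('a, 'b) mgraph \<Rightarrow> bool" where
  "map_rich G \<longleftrightarrow> (\<exists>M :: (nat, nat) cmap. rich M \<and> mgraph_iso G (Gof M))"

definition complete_graph :: "nat \<Rightarrow> (nat, nat set) mgraph" where
  "complete_graph m = \<lparr>gverts = {..<m},
                       gedges = {{i, j} | i j. i < m \<and> j < m \<and> i \<noteq> j},
                       ginc = (\<lambda>e x. if x \<in> e then 1 else 0)\<rparr>"

end

theory Submission
  imports Defs "HOL-Library.Countable"
begin


definition rho :: "nat \<Rightarrow> nat \<Rightarrow> nat \<Rightarrow> nat" where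
  "rho m u w = (if w+1 = m then (if u = 0 then 1 else 0)
                else if w+1 = u then (if w+2 = m then 0 else w+2) else w+1)"
definition rinv :: "nat \<Rightarrow> nat \<Rightarrow> nat \<Rightarrow> nat" where
  "rinv m u w = (if w = 0 then (if u+1 = m then m-2 else m-1)
                 else if w = u+1 then (if u = 0 then m-1 else u-1) else w-1)"

lemma rho_props:
  assumes "2 \<le> m" "u < m" "w < m" "w \<noteq> u"
  shows "rho m u w < m" "rho m u w \<noteq> u" "rinv m u (rho m u w) = w"
  using assms unfolding rho_def rinv_def by auto

lemma rinv_props:
  assumes "2 \<le> m" "u < m" "w < m" "w \<noteq> u"
  shows "rinv m u w < m" "rinv m u w \<noteq> u" "rho m u (rinv m u w) = w"
  using assms unfolding rho_def rinv_def by (auto split: if_splits)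

lemma sym_adj_rel: "sym (adj_rel en S)"
  unfolding adj_rel_def sym_def by (auto simp: insert_commute)

lemma comp_self: "x \<in> comp en S x"
  unfolding comp_def by auto

lemma comp_trans: "y \<in> comp en S x \<Longrightarrow> z \<in> comp en S y \<Longrightarrow> z \<in> comp en S x"
  unfolding comp_def by auto

lemma comp_sym: "y \<in> comp en S x \<Longrightarrow> x \<in> comp en S y"
proof -
  assume "y \<in> comp en S x"
  then have "(x, y) \<in> (adj_rel en S)\<^sup>*" unfolding comp_def by simp
  then have "(y, x) \<in> (adj_rel en S)\<^sup>*" by (rule symD[OF sym_rtrancl[OF sym_adj_rel]])
  then show ?thesis unfolding comp_def by simp
qed

lemma comp_eq: "y \<in> comp en S x \<Longrightarrow> comp en S y = comp en S x"
proof
  assume h: "y \<in> comp en S x"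
  show "comp en S y \<subseteq> comp en S x" using comp_trans[OF h] by blast
  show "comp en S x \<subseteq> comp en S y" using comp_trans[OF comp_sym[OF h]] by blast
qed

lemma comp_step: "y \<in> comp en S x \<Longrightarrow> (y, z) \<in> adj_rel en S \<Longrightarrow> z \<in> comp en S x"
  unfolding comp_def by auto

lemma comp_closed:
  assumes "x \<in> A" "\<And>y z. (y, z) \<in> adj_rel en S \<Longrightarrow> y \<in> A \<Longrightarrow> z \<in> A"
  shows "comp en S x \<subseteq> A"
proof
  fix y assume "y \<in> comp en S x"
  then have "(x, y) \<in> (adj_rel en S)\<^sup>*" unfolding comp_def by auto
  then show "y \<in> A" by (induction rule: rtrancl_induct) (use assms in auto)
qed

lemma comp_cong: "adj_rel en S = adj_rel en' S' \<Longrightarrow> comp en S = comp en' S'"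
  unfolding comp_def by auto

lemma adj_rel_Un: "adj_rel en (A \<union> B) = adj_rel en A \<union> adj_rel en B"
  unfolding adj_rel_def by auto



section \<open>The concrete map\<close>

definition nd :: "nat \<Rightarrow> nat \<Rightarrow> nat \<Rightarrow> nat" where "nd u w s = to_nat (u, w, s)"
definition eid :: "nat \<Rightarrow> nat \<Rightarrow> nat \<Rightarrow> nat \<Rightarrow> nat" where "eid t u w s = to_nat (t, u, w, s)"

lemma nd_eq [simp]: "nd u w s = nd u' w' s' \<longleftrightarrow> u = u' \<and> w = w' \<and> s = s'"
  unfolding nd_def by auto
lemma eid_eq [simp]: "eid t u w s = eid t' u' w' s' \<longleftrightarrow> t = t' \<and> u = u' \<and> w = w' \<and> s = s'"
  unfolding eid_def by auto

definition fp :: "nat \<Rightarrow> nat \<Rightarrow> nat \<Rightarrow> nat" where "fp u w s = (if odd (u + w) then s else 1 - s)"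
definition zp :: "nat \<Rightarrow> nat \<Rightarrow> nat \<Rightarrow> nat" where "zp u w s = (if odd (u + w) then 1 - s else s)"

definition en :: "nat \<Rightarrow> nat \<Rightarrow> nat set" where
  "en m e = (case from_nat e :: nat \<times> nat \<times> nat \<times> nat of (t, u, w, s) \<Rightarrow>
     if t = 0 then {nd u w 0, nd u w 1} else if t = 1 then {nd u w 1, nd u (rho m u w) 0}
     else {nd u w s, nd w u (fp u w s)})"

lemma en_eid [simp]: "en m (eid t u w s) = (if t = 0 then {nd u w 0, nd u w 1} else if t = 1 then {nd u w 1, nd u (rho m u w) 0}
     else {nd u w s, nd w u (fp u w s)})"
  unfolding en_def eid_def by (simp only: from_nat_to_nat prod.case)

definition NN :: "nat \<Rightarrow> nat set" where
  "NN m = {nd u w s | u w s. u < m \<and> w < m \<and> u \<noteq> w \<and> s < 2}"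
definition VE :: "nat \<Rightarrow> nat set" where
  "VE m = {eid 0 u w 0 | u w. u < m \<and> w < m \<and> u \<noteq> w}"
definition AE :: "nat \<Rightarrow> nat set" where
  "AE m = {eid 1 u w 0 | u w. u < m \<and> w < m \<and> u \<noteq> w}"
definition FE :: "nat \<Rightarrow> nat set" where
  "FE m = {eid 2 u w s | u w s. u < w \<and> w < m \<and> s < 2}"

definition MM :: "nat \<Rightarrow> (nat, nat) cmap" where
  "MM m = \<lparr>nodes = NN m, edges = VE m \<union> AE m \<union> FE m, ends = en m, vm = VE m, fm = FE m\<rparr>"

lemma MM_simps [simp]: "nodes (MM m) = NN m" "edges (MM m) = VE m \<union> AE m \<union> FE m"
  "ends (MM m) = en m" "vm (MM m) = VE m" "fm (MM m) = FE m"
  unfolding MM_def by simp_all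

lemma disj_tags: "VE m \<inter> AE m = {}" "VE m \<inter> FE m = {}" "AE m \<inter> FE m = {}"
  unfolding VE_def AE_def FE_def by auto

lemma am_MM [simp]: "am (MM m) = AE m"
  unfolding am_def using disj_tags[of m] by auto

lemma fp_sym [simp]: "fp w u s = fp u w s" "zp w u s = zp u w s"
  unfolding fp_def zp_def by (simp_all add: add.commute)

lemma fp_lt [simp]: "s < 2 \<Longrightarrow> fp u w s < 2" "s < 2 \<Longrightarrow> zp u w s < 2"
  unfolding fp_def zp_def by auto

lemma fp_inv [simp]: "s < 2 \<Longrightarrow> fp u w (fp u w s) = s" "s < 2 \<Longrightarrow> zp u w (zp u w s) = s"
  unfolding fp_def zp_def by auto

lemma finite_NN: "finite (NN m)"
proof -
  have "NN m \<subseteq> (\<lambda>(u, w, s). nd u w s) ` ({..<m} \<times> {..<m} \<times> {..<2})"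
  proof
    fix x assume "x \<in> NN m"
    then obtain u w s where "x = nd u w s" "u < m" "w < m" "s < 2" unfolding NN_def by auto
    then show "x \<in> (\<lambda>(u, w, s). nd u w s) ` ({..<m} \<times> {..<m} \<times> {..<2})"
      by (intro image_eqI[of _ _ "(u, w, s)"]) auto
  qed
  then show ?thesis by (rule finite_subset) auto
qed

lemma finite_edges: "finite (VE m \<union> AE m \<union> FE m)"
proof -
  have "VE m \<union> AE m \<union> FE m \<subseteq> (\<lambda>(t, u, w, s). eid t u w s) ` ({..<3} \<times> {..<m} \<times> {..<m} \<times> {..<2})"
  proof
    fix x assume "x \<in> VE m \<union> AE m \<union> FE m"
    then obtain t u w s where "x = eid t u w s" "t < 3" "u < m" "w < m" "s < 2" unfolding VE_def AE_def FE_def by auto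
    then show "x \<in> (\<lambda>(t, u, w, s). eid t u w s) ` ({..<3} \<times> {..<m} \<times> {..<m} \<times> {..<2})"
      by (intro image_eqI[of _ _ "(t, u, w, s)"]) auto
  qed
  then show ?thesis by (rule finite_subset) auto
qed



definition vt :: "nat \<Rightarrow> nat \<Rightarrow> nat \<Rightarrow> nat \<Rightarrow> bool" where
  "vt m u w s \<longleftrightarrow> u < m \<and> w < m \<and> u \<noteq> w \<and> s < 2"

definition rel :: "nat \<Rightarrow> (nat \<Rightarrow> nat \<Rightarrow> nat \<Rightarrow> nat) \<Rightarrow> (nat \<times> nat) set" where
  "rel m P = {(nd u w s, P u w s) | u w s. vt m u w s}"

definition vP :: "nat \<Rightarrow> nat \<Rightarrow> nat \<Rightarrow> nat" where "vP u w s = nd u w (1 - s)"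
definition aP :: "nat \<Rightarrow> nat \<Rightarrow> nat \<Rightarrow> nat \<Rightarrow> nat" where
  "aP m u w s = (if s = 1 then nd u (rho m u w) 0 else nd u (rinv m u w) 1)"
definition fP :: "nat \<Rightarrow> nat \<Rightarrow> nat \<Rightarrow> nat" where "fP u w s = nd w u (fp u w s)"
definition zP :: "nat \<Rightarrow> nat \<Rightarrow> nat \<Rightarrow> nat" where "zP u w s = nd w u (zp u w s)"

lemma relI: "vt m u w s \<Longrightarrow> (nd u w s, P u w s) \<in> rel m P"
  unfolding rel_def by blast

lemma relE: "(x, y) \<in> rel m P \<Longrightarrow> (\<And>u w s. vt m u w s \<Longrightarrow> x = nd u w s \<Longrightarrow> y = P u w s \<Longrightarrow> thesis) \<Longrightarrow> thesis"
  unfolding rel_def by blast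

lemma s_cases: "(s::nat) < 2 \<Longrightarrow> s = 0 \<or> s = 1" by auto

lemma adjV: "adj_rel (en m) (VE m) = rel m (\<lambda>u w s. vP u w s)"
proof (intro set_eqI iffI)
  fix p assume "p \<in> adj_rel (en m) (VE m)"
  then obtain x y u w where p: "p = (x, y)" and uw: "u < m" "w < m" "u \<noteq> w"
    and e: "{x, y} = {nd u w 0, nd u w 1}"
    unfolding adj_rel_def VE_def by auto
  from e have "(x = nd u w 0 \<and> y = nd u w 1) \<or> (x = nd u w 1 \<and> y = nd u w 0)"
    by (auto simp: doubleton_eq_iff)
  then show "p \<in> rel m vP"
  proof
    assume "x = nd u w 0 \<and> y = nd u w 1"
    then show ?thesis using relI[of m u w 0 vP] uw p by (auto simp: vt_def vP_def)
  next
    assume "x = nd u w 1 \<and> y = nd u w 0"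
    then show ?thesis using relI[of m u w 1 vP] uw p by (auto simp: vt_def vP_def)
  qed
next
  fix p assume "p \<in> rel m vP"
  then obtain u w s where p: "p = (nd u w s, nd u w (1 - s))" and v: "vt m u w s"
    unfolding rel_def vP_def by auto
  have "eid 0 u w 0 \<in> VE m" using v unfolding VE_def vt_def by auto
  moreover have "en m (eid 0 u w 0) = {nd u w s, nd u w (1 - s)}"
    using v s_cases[of s] unfolding vt_def by auto
  ultimately show "p \<in> adj_rel (en m) (VE m)" unfolding adj_rel_def p by blast
qed

lemma adjA:
  assumes m: "2 \<le> m"
  shows "adj_rel (en m) (AE m) = rel m (aP m)"
proof (intro set_eqI iffI)
  fix p assume "p \<in> adj_rel (en m) (AE m)"
  then obtain x y u w where p: "p = (x, y)" and uw: "u < m" "w < m" "u \<noteq> w"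
    and e: "{x, y} = {nd u w 1, nd u (rho m u w) 0}"
    unfolding adj_rel_def AE_def by auto
  note r = rho_props[OF m uw(1,2) uw(3)[symmetric]]
  from e have "(x = nd u w 1 \<and> y = nd u (rho m u w) 0) \<or> (x = nd u (rho m u w) 0 \<and> y = nd u w 1)"
    by (auto simp: doubleton_eq_iff)
  then show "p \<in> rel m (aP m)"
  proof
    assume "x = nd u w 1 \<and> y = nd u (rho m u w) 0"
    then show ?thesis using relI[of m u w 1 "aP m"] uw p by (auto simp: vt_def aP_def)
  next
    assume "x = nd u (rho m u w) 0 \<and> y = nd u w 1"
    then show ?thesis using relI[of m u "rho m u w" 0 "aP m"] uw p r by (auto simp: vt_def aP_def)
  qed
next
  fix p assume "p \<in> rel m (aP m)"
  then obtain u w s where p: "p = (nd u w s, aP m u w s)" and v: "vt m u w s"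
    unfolding rel_def by auto
  have uw: "u < m" "w < m" "w \<noteq> u" using v unfolding vt_def by auto
  show "p \<in> adj_rel (en m) (AE m)"
  proof (cases "s = 1")
    case True
    have "eid 1 u w 0 \<in> AE m" using v unfolding AE_def vt_def by auto
    moreover have "en m (eid 1 u w 0) = {nd u w s, aP m u w s}"
      using True unfolding aP_def by auto
    ultimately show ?thesis unfolding adj_rel_def p by blast
  next
    case False
    then have s0: "s = 0" using v unfolding vt_def by auto
    note r = rinv_props[OF m uw]
    have "eid 1 u (rinv m u w) 0 \<in> AE m" using v r unfolding AE_def vt_def by auto
    moreover have "en m (eid 1 u (rinv m u w) 0) = {nd u w s, aP m u w s}"
      using s0 r unfolding aP_def by auto
    ultimately show ?thesis unfolding adj_rel_def p by blast
  qed
qed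

lemma adjF: "adj_rel (en m) (FE m) = rel m fP"
proof (intro set_eqI iffI)
  fix p assume "p \<in> adj_rel (en m) (FE m)"
  then obtain x y u w s where p: "p = (x, y)" and uw: "u < w" "w < m" "s < 2"
    and e: "{x, y} = {nd u w s, nd w u (fp u w s)}"
    unfolding adj_rel_def FE_def by auto
  from e have "(x = nd u w s \<and> y = nd w u (fp u w s)) \<or> (x = nd w u (fp u w s) \<and> y = nd u w s)"
    by (auto simp: doubleton_eq_iff)
  then show "p \<in> rel m fP"
  proof
    assume "x = nd u w s \<and> y = nd w u (fp u w s)"
    then show ?thesis using relI[of m u w s fP] uw p by (auto simp: vt_def fP_def)
  next
    assume "x = nd w u (fp u w s) \<and> y = nd u w s"
    then show ?thesis using relI[of m w u "fp u w s" fP] uw p by (auto simp: vt_def fP_def)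
  qed
next
  fix p assume "p \<in> rel m fP"
  then obtain u w s where p: "p = (nd u w s, nd w u (fp u w s))" and v: "vt m u w s"
    unfolding rel_def fP_def by auto
  show "p \<in> adj_rel (en m) (FE m)"
  proof (cases "u < w")
    case True
    have "eid 2 u w s \<in> FE m" using v True unfolding FE_def vt_def by auto
    moreover have "en m (eid 2 u w s) = {nd u w s, nd w u (fp u w s)}" by simp
    ultimately show ?thesis unfolding adj_rel_def p by blast
  next
    case False
    then have wu: "w < u" using v unfolding vt_def by auto
    have "eid 2 w u (fp u w s) \<in> FE m" using v wu unfolding FE_def vt_def by auto
    moreover have "en m (eid 2 w u (fp u w s)) = {nd u w s, nd w u (fp u w s)}"
      using v unfolding vt_def by auto
    ultimately show ?thesis unfolding adj_rel_def p by blast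
  qed
qed


definition Sq :: "nat \<Rightarrow> nat \<Rightarrow> nat set" where
  "Sq u w = {nd u w 0, nd u w 1, nd w u 0, nd w u 1}"

lemma Sq_sym: "Sq w u = Sq u w" unfolding Sq_def by auto

lemma nd_in_Sq: "nd a b t \<in> Sq u w \<longleftrightarrow> t < 2 \<and> ((a = u \<and> b = w) \<or> (a = w \<and> b = u))"
  unfolding Sq_def by auto

lemma Sq_eq: "Sq a b = Sq u w \<longleftrightarrow> (a = u \<and> b = w) \<or> (a = w \<and> b = u)"
proof
  assume "Sq a b = Sq u w"
  moreover have "nd a b 0 \<in> Sq a b" by (simp add: nd_in_Sq)
  ultimately have "nd a b 0 \<in> Sq u w" by simp
  then show "(a = u \<and> b = w) \<or> (a = w \<and> b = u)" by (simp add: nd_in_Sq)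
next
  assume "(a = u \<and> b = w) \<or> (a = w \<and> b = u)"
  then show "Sq a b = Sq u w" using Sq_sym by auto
qed

lemma comp_rel_sub: "adj_rel ef S = R \<Longrightarrow> x \<in> A \<Longrightarrow> (\<And>y z. (y, z) \<in> R \<Longrightarrow> y \<in> A \<Longrightarrow> z \<in> A) \<Longrightarrow> comp ef S x \<subseteq> A"
  using comp_closed by metis

lemma comp_rel_mem: "adj_rel ef S = R \<Longrightarrow> y \<in> comp ef S x \<Longrightarrow> (y, z) \<in> R \<Longrightarrow> z \<in> comp ef S x"
  using comp_step by metis

lemma vt_sym: "vt m u w s \<Longrightarrow> vt m w u t \<longleftrightarrow> t < 2"
  unfolding vt_def by auto

lemma Sq_alt: "s < 2 \<Longrightarrow> t < 2 \<Longrightarrow> Sq u w = {nd u w s, nd u w (1 - s), nd w u t, nd w u (1 - t)}"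
  unfolding Sq_def by (auto dest!: s_cases)

lemma comp_sq:
  assumes v: "vt m u w s"
  shows "comp (en m) (VE m \<union> FE m) (nd u w s) = Sq u w"
proof
  have R: "adj_rel (en m) (VE m \<union> FE m) = rel m vP \<union> rel m fP"
    by (simp add: adj_rel_Un adjV adjF)
  show "comp (en m) (VE m \<union> FE m) (nd u w s) \<subseteq> Sq u w"
  proof (rule comp_rel_sub[OF R])
    show "nd u w s \<in> Sq u w" using v by (simp add: nd_in_Sq vt_def)
  next
    fix y z assume "(y, z) \<in> rel m vP \<union> rel m fP" "y \<in> Sq u w"
    then show "z \<in> Sq u w"
      by (auto elim!: relE simp: nd_in_Sq vP_def fP_def vt_def)
  qed
next
  let ?C = "comp (en m) (VE m \<union> FE m) (nd u w s)"
  have R: "adj_rel (en m) (VE m \<union> FE m) = rel m vP \<union> rel m fP"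
    by (simp add: adj_rel_Un adjV adjF)
  have s2: "s < 2" "fp u w s < 2" using v by (auto simp: vt_def)
  have v2: "vt m w u (fp u w s)" using v s2 by (auto simp: vt_def)
  have 1: "nd u w s \<in> ?C" by (rule comp_self)
  have 2: "nd u w (1 - s) \<in> ?C"
    using comp_rel_mem[OF R 1, of "vP u w s"] relI[OF v, of vP] by (auto simp: vP_def)
  have 3: "nd w u (fp u w s) \<in> ?C"
    using comp_rel_mem[OF R 1, of "fP u w s"] relI[OF v, of fP] by (auto simp: fP_def)
  have 4: "nd w u (1 - fp u w s) \<in> ?C"
    using comp_rel_mem[OF R 3, of "vP w u (fp u w s)"] relI[OF v2, of vP] by (auto simp: vP_def)
  show "Sq u w \<subseteq> ?C" using 1 2 3 4 Sq_alt[OF s2] by auto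
qed

lemma squares_MM: "squares (MM m) = {Sq u w | u w. u < w \<and> w < m}"
proof (intro set_eqI iffI)
  fix q assume "q \<in> squares (MM m)"
  then obtain x where x: "x \<in> NN m" and q: "q = comp (en m) (VE m \<union> FE m) x"
    unfolding squares_def by auto
  from x obtain u w s where v: "vt m u w s" and xd: "x = nd u w s"
    unfolding NN_def vt_def by auto
  have "q = Sq u w" using comp_sq[OF v] q xd by simp
  show "q \<in> {Sq u w | u w. u < w \<and> w < m}"
  proof (cases "u < w")
    case True
    then show ?thesis using v \<open>q = Sq u w\<close> unfolding vt_def by blast
  next
    case False
    then have "w < u" using v unfolding vt_def by auto
    then show ?thesis using v \<open>q = Sq u w\<close> Sq_sym[of u w] unfolding vt_def by blast
  qed
next
  fix q assume "q \<in> {Sq u w | u w. u < w \<and> w < m}"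
  then obtain u w where q: "q = Sq u w" "u < w" "w < m" by auto
  then have v: "vt m u w 0" unfolding vt_def by auto
  have "nd u w 0 \<in> NN m" using v unfolding NN_def vt_def by auto
  then show "q \<in> squares (MM m)" unfolding squares_def using comp_sq[OF v] q by auto
qed

lemma sub_ne: "(x::nat) < 2 \<Longrightarrow> Suc 0 - x \<noteq> x" by arith

lemma zp_fp: "s < 2 \<Longrightarrow> zp u w s = 1 - fp u w s" unfolding zp_def fp_def by auto

lemma zdiag_MM: "zdiag (MM m) = {{nd u w s, zP u w s} | u w s. vt m u w s}"
proof (intro set_eqI iffI)
  fix d assume "d \<in> zdiag (MM m)"
  then obtain x y where x: "x \<in> NN m" and d: "d = {x, y}" and yx: "y \<noteq> x"
     and yc: "y \<in> comp (en m) (VE m \<union> FE m) x"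
     and nj: "\<not> (\<exists>e\<in>VE m \<union> FE m. en m e = {x, y})"
    unfolding zdiag_def by auto
  obtain u w s where v: "vt m u w s" and xd: "x = nd u w s" using x unfolding NN_def vt_def by auto
  have s2: "s < 2" "fp u w s < 2" "zp u w s < 2" using v by (auto simp: vt_def)
  have "y \<in> Sq u w" using yc comp_sq[OF v] xd by simp
  then have "y \<in> {nd u w s, nd u w (1 - s), nd w u (fp u w s), nd w u (1 - fp u w s)}"
    using Sq_alt[OF s2(1,2)] by simp
  moreover have "y \<noteq> nd u w (1 - s)"
  proof
    assume "y = nd u w (1 - s)"
    moreover have "eid 0 u w 0 \<in> VE m" using v unfolding VE_def vt_def by auto
    moreover have "en m (eid 0 u w 0) = {x, nd u w (1 - s)}" using xd s_cases[OF s2(1)] by auto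
    ultimately show False using nj by blast
  qed
  moreover have "y \<noteq> nd w u (fp u w s)"
  proof
    assume y: "y = nd w u (fp u w s)"
    have "(x, y) \<in> adj_rel (en m) (FE m)" unfolding adjF using relI[OF v, of fP] xd y by (simp add: fP_def)
    then show False using nj unfolding adj_rel_def by blast
  qed
  ultimately have "y = nd w u (1 - fp u w s)" using yx xd by auto
  then have "d = {nd u w s, zP u w s}" using d xd s2 by (simp add: zP_def zp_fp)
  then show "d \<in> {{nd u w s, zP u w s} | u w s. vt m u w s}" using v by blast
next
  fix d assume "d \<in> {{nd u w s, zP u w s} | u w s. vt m u w s}"
  then obtain u w s where v: "vt m u w s" and d: "d = {nd u w s, zP u w s}" by blast
  have s2: "s < 2" "fp u w s < 2" "zp u w s < 2" using v by (auto simp: vt_def)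
  have x: "nd u w s \<in> NN m" using v unfolding NN_def vt_def by auto
  have yne: "zP u w s \<noteq> nd u w s" using v by (auto simp: zP_def vt_def)
  have yc: "zP u w s \<in> comp (en m) (VE m \<union> FE m) (nd u w s)"
    using comp_sq[OF v] s2 by (simp add: zP_def nd_in_Sq)
  have nj: "\<not> (\<exists>e\<in>VE m \<union> FE m. en m e = {nd u w s, zP u w s})"
  proof
    assume "\<exists>e\<in>VE m \<union> FE m. en m e = {nd u w s, zP u w s}"
    then have "(nd u w s, zP u w s) \<in> adj_rel (en m) (VE m \<union> FE m)" unfolding adj_rel_def by blast
    then have "(nd u w s, zP u w s) \<in> rel m vP \<union> rel m fP" by (simp add: adj_rel_Un adjV adjF)
    then show False using v zp_fp[OF s2(1), of u w] s2 sub_ne[OF s2(2)]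
      by (auto elim!: relE simp: zP_def vP_def fP_def vt_def)
  qed
  show "d \<in> zdiag (MM m)" unfolding zdiag_def using x yne yc nj d by auto
qed


subsection \<open>Phial and dual\<close>

lemma phial_simps [simp]:
  "nodes (phial (MM m)) = NN m"
  "edges (phial (MM m)) = Inl ` (AE m \<union> FE m) \<union> Inr ` zdiag (MM m)"
  "ends (phial (MM m)) = qends (MM m)"
  "vm (phial (MM m)) = Inr ` zdiag (MM m)"
  "fm (phial (MM m)) = Inl ` FE m"
proof -
  have "VE m \<union> AE m \<union> FE m - VE m = AE m \<union> FE m" using disj_tags[of m] by auto
  then show "edges (phial (MM m)) = Inl ` (AE m \<union> FE m) \<union> Inr ` zdiag (MM m)"
    unfolding phial_def by simp
qed (simp_all add: phial_def)

lemma am_phial [simp]: "am (phial (MM m)) = Inl ` AE m"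
  unfolding am_def using disj_tags[of m] by auto

lemma dual_simps [simp]:
  "nodes (dual (MM m)) = NN m" "edges (dual (MM m)) = VE m \<union> AE m \<union> FE m"
  "ends (dual (MM m)) = en m" "vm (dual (MM m)) = FE m" "fm (dual (MM m)) = VE m"
  unfolding dual_def by simp_all

lemma am_dual [simp]: "am (dual (MM m)) = AE m"
  unfolding am_def using disj_tags[of m] by auto

lemma adj_Inl: "adj_rel (qends M) (Inl ` S) = adj_rel (ends M) S"
  unfolding adj_rel_def qends_def by auto

lemma adjZ: "adj_rel (qends (MM m)) (Inr ` zdiag (MM m)) = rel m zP"
proof (intro set_eqI iffI)
  fix p assume "p \<in> adj_rel (qends (MM m)) (Inr ` zdiag (MM m))"
  then obtain x y u w s where p: "p = (x, y)" and v: "vt m u w s"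
    and e: "{x, y} = {nd u w s, zP u w s}"
    unfolding adj_rel_def qends_def zdiag_MM by auto
  have s2: "zp u w s < 2" using v by (simp add: vt_def)
  from e have "(x = nd u w s \<and> y = zP u w s) \<or> (x = zP u w s \<and> y = nd u w s)"
    by (auto simp: doubleton_eq_iff)
  then show "p \<in> rel m zP"
  proof
    assume "x = nd u w s \<and> y = zP u w s"
    then show ?thesis using relI[OF v, of zP] p by auto
  next
    assume xy: "x = zP u w s \<and> y = nd u w s"
    have v2: "vt m w u (zp u w s)" using v s2 by (auto simp: vt_def)
    have "zP w u (zp u w s) = nd u w s" using v by (simp add: zP_def vt_def)
    then show ?thesis using relI[OF v2, of zP] p xy by (simp add: zP_def)
  qed
next
  fix p assume "p \<in> rel m zP"
  then obtain u w s where p: "p = (nd u w s, zP u w s)" and v: "vt m u w s"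
    unfolding rel_def by auto
  have "{nd u w s, zP u w s} \<in> zdiag (MM m)" unfolding zdiag_MM using v by blast
  then show "p \<in> adj_rel (qends (MM m)) (Inr ` zdiag (MM m))"
    unfolding adj_rel_def qends_def p by force
qed

lemma comp_sq_phial:
  assumes v: "vt m u w s"
  shows "comp (qends (MM m)) (Inr ` zdiag (MM m) \<union> Inl ` FE m) (nd u w s) = Sq u w"
proof
  have R: "adj_rel (qends (MM m)) (Inr ` zdiag (MM m) \<union> Inl ` FE m) = rel m zP \<union> rel m fP"
    by (simp add: adj_rel_Un adjZ adj_Inl adjF)
  show "comp (qends (MM m)) (Inr ` zdiag (MM m) \<union> Inl ` FE m) (nd u w s) \<subseteq> Sq u w"
  proof (rule comp_rel_sub[OF R])
    show "nd u w s \<in> Sq u w" using v by (simp add: nd_in_Sq vt_def)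
  next
    fix y z assume "(y, z) \<in> rel m zP \<union> rel m fP" "y \<in> Sq u w"
    then show "z \<in> Sq u w"
      by (auto elim!: relE simp: nd_in_Sq zP_def fP_def vt_def)
  qed
next
  let ?C = "comp (qends (MM m)) (Inr ` zdiag (MM m) \<union> Inl ` FE m) (nd u w s)"
  have R: "adj_rel (qends (MM m)) (Inr ` zdiag (MM m) \<union> Inl ` FE m) = rel m zP \<union> rel m fP"
    by (simp add: adj_rel_Un adjZ adj_Inl adjF)
  have s2: "s < 2" "fp u w s < 2" using v by (auto simp: vt_def)
  have v2: "vt m w u (fp u w s)" using v s2 by (auto simp: vt_def)
  have 1: "nd u w s \<in> ?C" by (rule comp_self)
  have 3: "nd w u (fp u w s) \<in> ?C"
    using comp_rel_mem[OF R 1, of "fP u w s"] relI[OF v, of fP] by (auto simp: fP_def)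
  have 4: "nd w u (1 - fp u w s) \<in> ?C"
    using comp_rel_mem[OF R 1, of "zP u w s"] relI[OF v, of zP] s2 by (auto simp: zP_def zp_fp)
  have "zP w u (fp u w s) = nd u w (1 - s)"
    using s2 by (simp add: zP_def zp_fp)
  then have 2: "nd u w (1 - s) \<in> ?C"
    using comp_rel_mem[OF R 3, of "zP w u (fp u w s)"] relI[OF v2, of zP] by auto
  show "Sq u w \<subseteq> ?C" using 1 2 3 4 Sq_alt[OF s2] by auto
qed

lemma squares_phial: "squares (phial (MM m)) = squares (MM m)"
proof -
  have "\<And>x. x \<in> NN m \<Longrightarrow> comp (qends (MM m)) (Inr ` zdiag (MM m) \<union> Inl ` FE m) x
           = comp (en m) (VE m \<union> FE m) x"
  proof -
    fix x assume "x \<in> NN m"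
    then obtain u w s where v: "vt m u w s" and x: "x = nd u w s" unfolding NN_def vt_def by auto
    show "comp (qends (MM m)) (Inr ` zdiag (MM m) \<union> Inl ` FE m) x = comp (en m) (VE m \<union> FE m) x"
      using comp_sq_phial[OF v] comp_sq[OF v] x by simp
  qed
  then show ?thesis unfolding squares_def by simp
qed

lemma squares_dual: "squares (dual (MM m)) = squares (MM m)"
  unfolding squares_def by (simp add: Un_commute)

subsection \<open>Vertex cycles\<close>

definition Vx :: "nat \<Rightarrow> nat \<Rightarrow> nat set" where
  "Vx m u = {nd u w s | w s. w < m \<and> w \<noteq> u \<and> s < 2}"

lemma nd_in_Vx: "nd a b t \<in> Vx m u \<longleftrightarrow> a = u \<and> b < m \<and> b \<noteq> u \<and> t < 2"
  unfolding Vx_def by auto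

lemma comp_vx:
  assumes m: "2 \<le> m" and v: "vt m u w s"
  shows "comp (en m) (VE m \<union> AE m) (nd u w s) = Vx m u"
proof
  have R: "adj_rel (en m) (VE m \<union> AE m) = rel m vP \<union> rel m (aP m)"
    by (simp add: adj_rel_Un adjV adjA[OF m])
  show "comp (en m) (VE m \<union> AE m) (nd u w s) \<subseteq> Vx m u"
  proof (rule comp_rel_sub[OF R])
    show "nd u w s \<in> Vx m u" using v by (simp add: nd_in_Vx vt_def)
  next
    fix y z assume "(y, z) \<in> rel m vP \<union> rel m (aP m)" "y \<in> Vx m u"
    then show "z \<in> Vx m u"
      using m by (auto elim!: relE simp: nd_in_Vx vP_def aP_def vt_def rho_props rinv_props)
  qed
next
  have R: "adj_rel (en m) (VE m \<union> AE m) = rel m vP \<union> rel m (aP m)"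
    by (simp add: adj_rel_Un adjV adjA[OF m])
  have um: "u < m" using v by (simp add: vt_def)
  define f0 where "f0 = (if u = 0 then 1 else (0::nat))"
  let ?C = "comp (en m) (VE m \<union> AE m) (nd u f0 1)"
  have f0: "f0 < m" "f0 \<noteq> u" using m unfolding f0_def by auto
  have key: "w' < m \<longrightarrow> w' \<noteq> u \<longrightarrow> nd u w' 1 \<in> ?C \<and> nd u w' 0 \<in> ?C" for w'
  proof (induction w' rule: less_induct)
    case (less w')
    show ?case
    proof (intro impI)
      assume w': "w' < m" "w' \<noteq> u"
      have vw: "vt m u w' 0" using w' um by (auto simp: vt_def)
      have A: "nd u w' 0 \<in> ?C \<Longrightarrow> nd u w' 1 \<in> ?C"
        using comp_rel_mem[OF R _, of "nd u w' 0" "nd u f0 1" "vP u w' 0"] relI[OF vw, of vP]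
        by (auto simp: vP_def)
      show "nd u w' 1 \<in> ?C \<and> nd u w' 0 \<in> ?C"
      proof (cases "w' = f0")
        case True
        have 1: "nd u w' 1 \<in> ?C" using True comp_self by simp
        have vw1: "vt m u w' 1" using w' um by (auto simp: vt_def)
        have "nd u w' 0 \<in> ?C"
          using comp_rel_mem[OF R 1, of "vP u w' 1"] relI[OF vw1, of vP] by (auto simp: vP_def)
        then show ?thesis using 1 by simp
      next
        case False
        define p where "p = (if w' = u + 1 then u - 1 else w' - 1)"
        have p: "p < w'" "p \<noteq> u" "p < m" "rho m u p = w'"
          using False w' m um unfolding p_def f0_def rho_def by (auto split: if_splits)
        then have "nd u p 1 \<in> ?C" using less.IH[of p] by auto
        moreover have vp: "vt m u p 1" using p um by (auto simp: vt_def)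
        ultimately have "nd u w' 0 \<in> ?C"
          using comp_rel_mem[OF R, of "nd u p 1" "nd u f0 1" "aP m u p 1"] relI[OF vp, of "aP m"] p
          by (auto simp: aP_def)
        then show ?thesis using A by simp
      qed
    qed
  qed
  have "nd u w s \<in> ?C" using key[of w] v s_cases[of s] by (auto simp: vt_def)
  then have eq: "comp (en m) (VE m \<union> AE m) (nd u w s) = ?C" by (rule comp_eq)
  show "Vx m u \<subseteq> comp (en m) (VE m \<union> AE m) (nd u w s)"
    unfolding eq
  proof
    fix x assume "x \<in> Vx m u"
    then obtain w' s' where "x = nd u w' s'" "w' < m" "w' \<noteq> u" "s' < 2" unfolding Vx_def by auto
    then show "x \<in> ?C" using key[of w'] s_cases[of s'] by auto
  qed
qed


lemma nd_in_NN [simp]: "nd a b t \<in> NN m \<longleftrightarrow> a < m \<and> b < m \<and> a \<noteq> b \<and> t < 2"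
  unfolding NN_def by auto

lemma NN_E: "x \<in> NN m \<Longrightarrow> (\<And>u w s. vt m u w s \<Longrightarrow> x = nd u w s \<Longrightarrow> P) \<Longrightarrow> P"
  unfolding NN_def vt_def by auto

definition eA :: "nat \<Rightarrow> nat \<Rightarrow> nat \<Rightarrow> nat \<Rightarrow> nat" where
  "eA m u w s = (if s = 1 then eid 1 u w 0 else eid 1 u (rinv m u w) 0)"
definition eF :: "nat \<Rightarrow> nat \<Rightarrow> nat \<Rightarrow> nat" where
  "eF u w s = (if u < w then eid 2 u w s else eid 2 w u (fp u w s))"

lemma inc_set:
  assumes m: "2 \<le> m" and v: "vt m u w s"
  shows "{e \<in> VE m \<union> AE m \<union> FE m. nd u w s \<in> en m e} = {eid 0 u w 0, eA m u w s, eF u w s}"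
proof (intro set_eqI iffI)
  have uw: "u < m" "w < m" "w \<noteq> u" "s < 2" using v by (auto simp: vt_def)
  note r = rinv_props[OF m uw(1-3)]
  fix e assume e: "e \<in> {e \<in> VE m \<union> AE m \<union> FE m. nd u w s \<in> en m e}"
  then have ee: "e \<in> VE m \<union> AE m \<union> FE m" and xe: "nd u w s \<in> en m e" by auto
  show "e \<in> {eid 0 u w 0, eA m u w s, eF u w s}"
  proof -
    { assume "e \<in> VE m"
      then obtain a b where "e = eid 0 a b 0" unfolding VE_def by auto
      then have ?thesis using xe by auto }
    moreover
    { assume "e \<in> AE m"
      then obtain a b where e1: "e = eid 1 a b 0" "a < m" "b < m" "a \<noteq> b" unfolding AE_def by auto
      have ?thesis
      proof (cases "s = 1")
        case True then show ?thesis using xe e1 by (auto simp: eA_def)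
      next
        case False
        then have "nd u w s = nd a (rho m a b) 0" using xe e1 by auto
        then have "u = a" "w = rho m a b" "s = 0" by auto
        then have "b = rinv m u w" using rho_props[OF m e1(2,3) e1(4)[symmetric]] by simp
        then show ?thesis using e1 \<open>u = a\<close> \<open>s = 0\<close> by (auto simp: eA_def)
      qed }
    moreover
    { assume "e \<in> FE m"
      then obtain a b t where e1: "e = eid 2 a b t" "a < b" "b < m" "t < 2" unfolding FE_def by auto
      have "nd u w s = nd a b t \<or> nd u w s = nd b a (fp a b t)" using xe e1 by auto
      then have ?thesis
      proof
        assume "nd u w s = nd a b t"
        then show ?thesis using e1 by (auto simp: eF_def)
      next
        assume "nd u w s = nd b a (fp a b t)"
        then have "u = b" "w = a" "s = fp a b t" by auto
        then have "t = fp u w s" using e1(4) by simp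
        then show ?thesis using e1 \<open>u = b\<close> \<open>w = a\<close> by (auto simp: eF_def)
      qed }
    ultimately show ?thesis using ee by blast
  qed
next
  have uw: "u < m" "w < m" "w \<noteq> u" "s < 2" using v by (auto simp: vt_def)
  note r = rinv_props[OF m uw(1-3)]
  fix e assume "e \<in> {eid 0 u w 0, eA m u w s, eF u w s}"
  then consider "e = eid 0 u w 0" | "e = eA m u w s" | "e = eF u w s" by blast
  then show "e \<in> {e \<in> VE m \<union> AE m \<union> FE m. nd u w s \<in> en m e}"
  proof cases
    case 1 then show ?thesis using uw s_cases[of s] by (auto simp: VE_def)
  next
    case 2 then show ?thesis using uw s_cases[of s] r by (auto simp: AE_def eA_def)
  next
    case 3 then show ?thesis using uw by (auto simp: FE_def eF_def)
  qed
qed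

lemma eAF_mem: "vt m u w s \<Longrightarrow> 2 \<le> m \<Longrightarrow> eid 0 u w 0 \<in> VE m \<and> eA m u w s \<in> AE m \<and> eF u w s \<in> FE m"
  using rinv_props[of m u w] unfolding vt_def VE_def AE_def FE_def eA_def eF_def by auto

lemma inc_VE:
  assumes m: "2 \<le> m" and v: "vt m u w s"
  shows "{e. e \<in> VE m \<and> nd u w s \<in> en m e} = {eid 0 u w 0}"
proof -
  have "{e. e \<in> VE m \<and> nd u w s \<in> en m e} = {e \<in> VE m \<union> AE m \<union> FE m. nd u w s \<in> en m e} \<inter> VE m" by auto
  also have "\<dots> = {eid 0 u w 0}" unfolding inc_set[OF m v]
    using eAF_mem[OF v m] disj_tags[of m] by auto
  finally show ?thesis .
qed

lemma inc_FE:
  assumes m: "2 \<le> m" and v: "vt m u w s"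
  shows "{e. e \<in> FE m \<and> nd u w s \<in> en m e} = {eF u w s}"
proof -
  have "{e. e \<in> FE m \<and> nd u w s \<in> en m e} = {e \<in> VE m \<union> AE m \<union> FE m. nd u w s \<in> en m e} \<inter> FE m" by auto
  also have "\<dots> = {eF u w s}" unfolding inc_set[OF m v]
    using eAF_mem[OF v m] disj_tags[of m] by auto
  finally show ?thesis .
qed

lemma card_Sq: "u \<noteq> w \<Longrightarrow> card (Sq u w) = 4"
  unfolding Sq_def by auto

lemma is_map_MM:
  assumes m: "2 \<le> m"
  shows "is_map (MM m)"
  unfolding is_map_def
proof (intro conjI)
  show "cubic_graph (MM m)"
    unfolding cubic_graph_def
  proof (intro conjI)
    show "finite (nodes (MM m))" using finite_NN by simp
    show "finite (edges (MM m))" using finite_edges by simp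
  next
    show "\<forall>e\<in>edges (MM m). ends (MM m) e \<subseteq> nodes (MM m) \<and> card (ends (MM m) e) = 2"
    proof
    fix e assume "e \<in> edges (MM m)"
    then have e: "e \<in> VE m \<union> AE m \<union> FE m" by simp
    show "ends (MM m) e \<subseteq> nodes (MM m) \<and> card (ends (MM m) e) = 2"
    proof -
      { assume "e \<in> VE m"
        then obtain a b where "e = eid 0 a b 0" "a < m" "b < m" "a \<noteq> b" unfolding VE_def by auto
        then have ?thesis by auto }
      moreover
      { assume "e \<in> AE m"
        then obtain a b where e1: "e = eid 1 a b 0" "a < m" "b < m" "a \<noteq> b" unfolding AE_def by auto
        note r = rho_props[OF m e1(2,3) e1(4)[symmetric]]
        have "nd a b 1 \<in> NN m" "nd a (rho m a b) 0 \<in> NN m" using e1 r unfolding NN_def by force+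
        then have ?thesis using e1 by auto }
      moreover
      { assume "e \<in> FE m"
        then obtain a b t where e1: "e = eid 2 a b t" "a < b" "b < m" "t < 2" unfolding FE_def by auto
        have "nd a b t \<in> NN m" "nd b a (fp a b t) \<in> NN m" using e1 unfolding NN_def by force+
        then have ?thesis using e1 by auto }
      ultimately show ?thesis using e by blast
    qed
    qed
  next
    show "\<forall>x\<in>nodes (MM m). card {e \<in> edges (MM m). x \<in> ends (MM m) e} = 3"
    proof
    fix x assume "x \<in> nodes (MM m)"
    then obtain u w s where v: "vt m u w s" and x: "x = nd u w s" by (auto elim!: NN_E)
    have "{e \<in> edges (MM m). x \<in> ends (MM m) e} = {eid 0 u w 0, eA m u w s, eF u w s}"
      using inc_set[OF m v] x by simp
    moreover have "card {eid 0 u w 0, eA m u w s, eF u w s} = 3"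
      unfolding eA_def eF_def by auto
    ultimately show "card {e \<in> edges (MM m). x \<in> ends (MM m) e} = 3" by simp
    qed
  qed
next
  show "perfect_matching (MM m) (vm (MM m))"
    unfolding perfect_matching_def
  proof (intro conjI ballI)
    show "vm (MM m) \<subseteq> edges (MM m)" by auto
    fix x assume "x \<in> nodes (MM m)"
    then obtain u w s where v: "vt m u w s" and x: "x = nd u w s" by (auto elim!: NN_E)
    have S: "\<forall>e. (e \<in> vm (MM m) \<and> x \<in> ends (MM m) e) = (e = eid 0 u w 0)"
      using inc_VE[OF m v] x by (simp add: set_eq_iff)
    show "\<exists>!e. e \<in> vm (MM m) \<and> x \<in> ends (MM m) e"
      by (simp only: S[rule_format] ex1_eq)
  qed
next
  show "perfect_matching (MM m) (fm (MM m))"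
    unfolding perfect_matching_def
  proof (intro conjI ballI)
    show "fm (MM m) \<subseteq> edges (MM m)" by auto
    fix x assume "x \<in> nodes (MM m)"
    then obtain u w s where v: "vt m u w s" and x: "x = nd u w s" by (auto elim!: NN_E)
    have S: "\<forall>e. (e \<in> fm (MM m) \<and> x \<in> ends (MM m) e) = (e = eF u w s)"
      using inc_FE[OF m v] x by (simp add: set_eq_iff)
    show "\<exists>!e. e \<in> fm (MM m) \<and> x \<in> ends (MM m) e"
      by (simp only: S[rule_format] ex1_eq)
  qed
next
  show "vm (MM m) \<inter> fm (MM m) = {}" using disj_tags[of m] by simp
next
  show "\<forall>x\<in>nodes (MM m). card (comp (ends (MM m)) (vm (MM m) \<union> fm (MM m)) x) = 4"
  proof
    fix x assume "x \<in> nodes (MM m)"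
    then obtain u w s where v: "vt m u w s" and x: "x = nd u w s" by (auto elim!: NN_E)
    show "card (comp (ends (MM m)) (vm (MM m) \<union> fm (MM m)) x) = 4"
      using comp_sq[OF v] x card_Sq[of u w] v by (auto simp: vt_def)
  qed
qed


lemma gverts_M:
  assumes m: "2 \<le> m"
  shows "gverts (Gof (MM m)) = Vx m ` {..<m}"
proof (intro set_eqI iffI)
  fix K assume "K \<in> gverts (Gof (MM m))"
  then obtain x where x: "x \<in> NN m" and K: "K = comp (en m) (VE m \<union> AE m) x"
    unfolding Gof_def by auto
  from x obtain u w s where v: "vt m u w s" and xd: "x = nd u w s" by (auto elim!: NN_E)
  have "K = Vx m u" using comp_vx[OF m v] K xd by simp
  then show "K \<in> Vx m ` {..<m}" using v by (auto simp: vt_def)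
next
  fix K assume "K \<in> Vx m ` {..<m}"
  then obtain u where u: "u < m" and K: "K = Vx m u" by auto
  define w where "w = (if u = 0 then 1 else (0::nat))"
  have v: "vt m u w 0" using u m unfolding vt_def w_def by auto
  have "nd u w 0 \<in> NN m" using v by (simp add: vt_def)
  moreover have "comp (en m) (VE m \<union> AE m) (nd u w 0) = K" using comp_vx[OF m v] K by simp
  ultimately show "K \<in> gverts (Gof (MM m))" unfolding Gof_def by force
qed

lemma gedges_M: "gedges (Gof (MM m)) = squares (MM m)"
  unfolding Gof_def by simp

lemma ginc_M:
  assumes ij: "i < m" "j < m" "i \<noteq> j" and u: "u < m"
  shows "ginc (Gof (MM m)) (Sq i j) (Vx m u) = (if u = i \<or> u = j then 1 else 0)"
proof -
  have "{e \<in> VE m. en m e \<subseteq> Sq i j \<and> en m e \<subseteq> Vx m u} =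
        (if u = i then {eid 0 i j 0} else {}) \<union> (if u = j then {eid 0 j i 0} else {})"
  proof (intro set_eqI iffI)
    fix e assume "e \<in> {e \<in> VE m. en m e \<subseteq> Sq i j \<and> en m e \<subseteq> Vx m u}"
    then obtain a b where e: "e = eid 0 a b 0" "a < m" "b < m" "a \<noteq> b"
      and sub: "{nd a b 0, nd a b 1} \<subseteq> Sq i j" "{nd a b 0, nd a b 1} \<subseteq> Vx m u"
      unfolding VE_def by auto
    from sub have "(a = i \<and> b = j) \<or> (a = j \<and> b = i)" "a = u" by (auto simp: nd_in_Sq nd_in_Vx)
    then show "e \<in> (if u = i then {eid 0 i j 0} else {}) \<union> (if u = j then {eid 0 j i 0} else {})"
      using e ij by auto
  next
    fix e assume "e \<in> (if u = i then {eid 0 i j 0} else {}) \<union> (if u = j then {eid 0 j i 0} else {})"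
    then have "(u = i \<and> e = eid 0 i j 0) \<or> (u = j \<and> e = eid 0 j i 0)" by (auto split: if_splits)
    then show "e \<in> {e \<in> VE m. en m e \<subseteq> Sq i j \<and> en m e \<subseteq> Vx m u}"
      using ij by (auto simp: VE_def nd_in_Sq nd_in_Vx)
  qed
  then show ?thesis unfolding Gof_def using ij by auto
qed

definition SqE :: "nat set \<Rightarrow> nat set" where
  "SqE e = {nd a b s | a b s. a \<in> e \<and> b \<in> e \<and> a \<noteq> b \<and> s < 2}"

lemma SqE_pair: "i \<noteq> j \<Longrightarrow> SqE {i, j} = Sq i j"
  unfolding SqE_def Sq_def by (auto dest!: s_cases)

lemma iso_M:
  assumes m: "2 \<le> m"
  shows "mgraph_iso (complete_graph m) (Gof (MM m))"
  unfolding mgraph_iso_def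
proof (intro exI conjI ballI)
  show "bij_betw (Vx m) (gverts (complete_graph m)) (gverts (Gof (MM m)))"
    unfolding gverts_M[OF m] bij_betw_def
  proof
    show "inj_on (Vx m) (gverts (complete_graph m))"
    proof (rule inj_onI)
      fix u u' assume u: "u \<in> gverts (complete_graph m)" "u' \<in> gverts (complete_graph m)"
        and eq: "Vx m u = Vx m u'"
      define w where "w = (if u = 0 then 1 else (0::nat))"
      have "nd u w 0 \<in> Vx m u" using u m unfolding w_def complete_graph_def by (auto simp: nd_in_Vx)
      then have "nd u w 0 \<in> Vx m u'" using eq by simp
      then show "u = u'" by (simp add: nd_in_Vx)
    qed
    show "Vx m ` gverts (complete_graph m) = Vx m ` {..<m}" unfolding complete_graph_def by simp
  qed
next
  show "bij_betw SqE (gedges (complete_graph m)) (gedges (Gof (MM m)))"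
    unfolding gedges_M squares_MM bij_betw_def
  proof
    show "inj_on SqE (gedges (complete_graph m))"
    proof (rule inj_onI)
      fix e e' assume e: "e \<in> gedges (complete_graph m)" "e' \<in> gedges (complete_graph m)"
        and eq: "SqE e = SqE e'"
      from e obtain i j i' j' where d: "e = {i, j}" "i \<noteq> j" "e' = {i', j'}" "i' \<noteq> j'"
        unfolding complete_graph_def by auto
      have "Sq i j = Sq i' j'" using eq d SqE_pair by metis
      then show "e = e'" using d by (auto simp: Sq_eq)
    qed
    show "SqE ` gedges (complete_graph m) = {Sq u w |u w. u < w \<and> w < m}"
    proof (intro set_eqI iffI)
      fix q assume "q \<in> SqE ` gedges (complete_graph m)"
      then obtain i j where q: "q = SqE {i, j}" "i < m" "j < m" "i \<noteq> j"
        unfolding complete_graph_def by auto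
      then have q': "q = Sq i j" using SqE_pair by simp
      show "q \<in> {Sq u w |u w. u < w \<and> w < m}"
      proof (cases "i < j")
        case True then show ?thesis using q q' by blast
      next
        case False then have "j < i" using q by auto
        then show ?thesis using q q' Sq_sym[of i j] by blast
      qed
    next
      fix q assume "q \<in> {Sq u w |u w. u < w \<and> w < m}"
      then obtain i j where q: "q = Sq i j" "i < j" "j < m" by auto
      then have "q = SqE {i, j}" using SqE_pair by simp
      moreover have "{i, j} \<in> gedges (complete_graph m)" using q unfolding complete_graph_def by force
      ultimately show "q \<in> SqE ` gedges (complete_graph m)" by blast
    qed
  qed
next
  fix e x assume e: "e \<in> gedges (complete_graph m)" and x: "x \<in> gverts (complete_graph m)"
  from e obtain i j where d: "e = {i, j}" "i < m" "j < m" "i \<noteq> j"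
    unfolding complete_graph_def by auto
  have xm: "x < m" using x unfolding complete_graph_def by simp
  show "ginc (Gof (MM m)) (SqE e) (Vx m x) = ginc (complete_graph m) e x"
    using ginc_M[OF d(2-4) xm] SqE_pair[OF d(4)] d unfolding complete_graph_def by auto
qed


section \<open>GF(2) bookkeeping\<close>

lemma symdiff_mem: "x \<in> symdiff A B \<longleftrightarrow> (x \<in> A) \<noteq> (x \<in> B)"
  unfolding symdiff_def by auto

lemma card_symdiff_parity:
  assumes "finite A" "finite B"
  shows "even (card (symdiff A B)) \<longleftrightarrow> even (card A + card B)"
proof -
  have A: "card A = card (A - B) + card (A \<inter> B)"
  proof -
    have "card ((A - B) \<union> (A \<inter> B)) = card (A - B) + card (A \<inter> B)"
      by (rule card_Un_disjoint) (use assms in auto)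
    moreover have "(A - B) \<union> (A \<inter> B) = A" by auto
    ultimately show ?thesis by simp
  qed
  have B: "card B = card (B - A) + card (A \<inter> B)"
  proof -
    have "card ((B - A) \<union> (A \<inter> B)) = card (B - A) + card (A \<inter> B)"
      by (rule card_Un_disjoint) (use assms in auto)
    moreover have "(B - A) \<union> (A \<inter> B) = B" by auto
    ultimately show ?thesis by simp
  qed
  have S: "card (symdiff A B) = card (A - B) + card (B - A)"
    unfolding symdiff_def using assms by (intro card_Un_disjoint) auto
  show ?thesis using A B S by presburger
qed

lemma symdiff_Int: "symdiff A B \<inter> T = symdiff (A \<inter> T) (B \<inter> T)"
  unfolding symdiff_def by auto

lemma even_symdiff_Int:
  assumes "finite T" "even (card (A \<inter> T))" "even (card (B \<inter> T))"
  shows "even (card (symdiff A B \<inter> T))"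
  using card_symdiff_parity[of "A \<inter> T" "B \<inter> T"] assms unfolding symdiff_Int by auto

lemma cob_empty: "coboundary G {} = {}"
  unfolding coboundary_def by simp

lemma cob_insert:
  assumes "finite U" "K \<notin> U"
  shows "coboundary G (insert K U) = symdiff (coboundary G {K}) (coboundary G U)"
  unfolding coboundary_def set_eq_iff symdiff_mem mem_Collect_eq using assms by auto

lemma cob_sub: "coboundary G U \<subseteq> gedges G"
  unfolding coboundary_def by auto

lemma even_cob_Int:
  assumes "finite U" "finite T" "\<And>K. K \<in> U \<Longrightarrow> even (card (coboundary G {K} \<inter> T))"
  shows "even (card (coboundary G U \<inter> T))"
  using assms
proof (induction U rule: finite_induct)
  case empty then show ?case by (simp add: cob_empty)
next
  case (insert K U)
  then show ?case unfolding cob_insert[OF insert(1,2)]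
    by (intro even_symdiff_Int) auto
qed

lemma sum_symdiff_parity:
  fixes g :: "'a \<Rightarrow> nat"
  assumes "finite A" "finite B"
  shows "odd (sum g (symdiff A B)) \<longleftrightarrow> odd (sum g A) \<noteq> odd (sum g B)"
proof -
  have A: "sum g A = sum g (A - B) + sum g (A \<inter> B)"
  proof -
    have "sum g ((A - B) \<union> (A \<inter> B)) = sum g (A - B) + sum g (A \<inter> B)"
      by (rule sum.union_disjoint) (use assms in auto)
    moreover have "(A - B) \<union> (A \<inter> B) = A" by auto
    ultimately show ?thesis by simp
  qed
  have B: "sum g B = sum g (B - A) + sum g (A \<inter> B)"
  proof -
    have "sum g ((B - A) \<union> (A \<inter> B)) = sum g (B - A) + sum g (A \<inter> B)"
      by (rule sum.union_disjoint) (use assms in auto)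
    moreover have "(B - A) \<union> (A \<inter> B) = B" by auto
    ultimately show ?thesis by simp
  qed
  have S: "sum g (symdiff A B) = sum g (A - B) + sum g (B - A)"
    unfolding symdiff_def using assms by (intro sum.union_disjoint) auto
  show ?thesis using A B S by presburger
qed

lemma cob_symdiff:
  assumes "finite U1" "finite U2"
  shows "coboundary G (symdiff U1 U2) = symdiff (coboundary G U1) (coboundary G U2)"
  unfolding coboundary_def set_eq_iff symdiff_mem mem_Collect_eq
  using sum_symdiff_parity[OF assms] by blast

lemma symdiff_sub: "symdiff A B \<subseteq> A \<union> B" unfolding symdiff_def by auto

lemma cob_space_symdiff:
  assumes "finite (gverts G)" "a \<in> cob_space G" "b \<in> cob_space G"
  shows "symdiff a b \<in> cob_space G"
proof -
  obtain U1 U2 where U: "U1 \<subseteq> gverts G" "U2 \<subseteq> gverts G" "a = coboundary G U1" "b = coboundary G U2"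
    using assms(2,3) unfolding cob_space_def by blast
  have f: "finite U1" "finite U2" using finite_subset[OF U(1) assms(1)] finite_subset[OF U(2) assms(1)] by auto
  have "symdiff a b = coboundary G (symdiff U1 U2)" using cob_symdiff[OF f, of G] U by simp
  moreover have "symdiff U1 U2 \<subseteq> gverts G" using U(1,2) symdiff_sub[of U1 U2] by blast
  ultimately show ?thesis unfolding cob_space_def by blast
qed

lemma xor4: "(((a::bool) \<noteq> b) \<noteq> (c \<noteq> d)) = ((a \<noteq> c) \<noteq> (b \<noteq> d))" by auto
lemma symdiff_assoc4: "symdiff (symdiff a1 b1) (symdiff a2 b2) = symdiff (symdiff a1 a2) (symdiff b1 b2)"
  unfolding set_eq_iff symdiff_mem by (intro allI xor4)

lemma space_sum_symdiff:
  assumes "finite (gverts G)" "finite (gverts H)"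
    "x \<in> space_sum (cob_space G) (cob_space H)" "y \<in> space_sum (cob_space G) (cob_space H)"
  shows "symdiff x y \<in> space_sum (cob_space G) (cob_space H)"
proof -
  obtain a1 b1 a2 b2 where "x = symdiff a1 b1" "y = symdiff a2 b2"
    "a1 \<in> cob_space G" "a2 \<in> cob_space G" "b1 \<in> cob_space H" "b2 \<in> cob_space H"
    using assms(3,4) unfolding space_sum_def by blast
  note h = this
  have 1: "symdiff x y = symdiff (symdiff a1 a2) (symdiff b1 b2)" unfolding h(1,2) by (rule symdiff_assoc4)
  have 2: "symdiff a1 a2 \<in> cob_space G" using cob_space_symdiff[OF assms(1) h(3,4)] .
  have 3: "symdiff b1 b2 \<in> cob_space H" using cob_space_symdiff[OF assms(2) h(5,6)] .
  show ?thesis unfolding space_sum_def mem_Collect_eq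
    by (rule exI[of _ "symdiff a1 a2"], rule exI[of _ "symdiff b1 b2"], intro conjI, fact 1, fact 2, fact 3)
qed

lemma empty_cob_space: "{} \<in> cob_space G"
  unfolding cob_space_def mem_Collect_eq by (rule exI[of _ "{}"]) (simp add: cob_empty)

lemma single_cob_space: "K \<in> gverts G \<Longrightarrow> coboundary G {K} \<in> cob_space G"
  unfolding cob_space_def mem_Collect_eq by (rule exI[of _ "{K}"]) simp

lemma symdiff_empty: "symdiff a {} = a" "symdiff {} a = a" unfolding symdiff_def by auto


abbreviation GM where "GM m \<equiv> Gof (MM m)"
abbreviation GD where "GD m \<equiv> Gof (dual (MM m))"
abbreviation GP where "GP m \<equiv> Gof (phial (MM m))"

lemma finite_squares: "finite (squares (MM m))"
  unfolding squares_def using finite_NN by simp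

lemma GD_simps:
  "gedges (GD m) = squares (MM m)"
  "gverts (GD m) = comp (en m) (FE m \<union> AE m) ` NN m"
  "ginc (GD m) s K = card {e \<in> FE m. en m e \<subseteq> s \<and> en m e \<subseteq> K}"
  unfolding Gof_def by (simp_all add: squares_dual)

lemma GP_simps:
  "gedges (GP m) = squares (MM m)"
  "gverts (GP m) = comp (qends (MM m)) (Inr ` zdiag (MM m) \<union> Inl ` AE m) ` NN m"
  "ginc (GP m) s K = card {e \<in> Inr ` zdiag (MM m). qends (MM m) e \<subseteq> s \<and> qends (MM m) e \<subseteq> K}"
  unfolding Gof_def by (simp_all add: squares_phial)

lemma adjD: "2 \<le> m \<Longrightarrow> adj_rel (en m) (FE m \<union> AE m) = rel m fP \<union> rel m (aP m)"
  by (simp add: adj_rel_Un adjF adjA)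

lemma adjP: "2 \<le> m \<Longrightarrow> adj_rel (qends (MM m)) (Inr ` zdiag (MM m) \<union> Inl ` AE m) = rel m zP \<union> rel m (aP m)"
  by (simp add: adj_rel_Un adjZ adj_Inl adjA)

lemma clo_X:
  assumes R: "adj_rel ef S = rel m X \<union> rel m (aP m)" and v: "vt m u w s"
    and K: "K = comp ef S x0" and y: "nd u w s \<in> K"
  shows "X u w s \<in> K"
  using comp_rel_mem[OF R y[unfolded K], of "X u w s"] relI[OF v, of X] K by auto

lemma clo_A:
  assumes R: "adj_rel ef S = rel m X \<union> rel m (aP m)" and v: "vt m u w s"
    and K: "K = comp ef S x0" and y: "nd u w s \<in> K"
  shows "aP m u w s \<in> K"
  using comp_rel_mem[OF R y[unfolded K], of "aP m u w s"] relI[OF v, of "aP m"] K by auto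

lemma clo_A_iff:
  assumes m: "2 \<le> m" and R: "adj_rel ef S = rel m X \<union> rel m (aP m)"
    and K: "K = comp ef S x0" and uw: "u < m" "w < m" "w \<noteq> u"
  shows "nd u w 1 \<in> K \<longleftrightarrow> nd u (rho m u w) 0 \<in> K"
proof -
  note r = rho_props[OF m uw]
  have v1: "vt m u w 1" using uw by (auto simp: vt_def)
  have v0: "vt m u (rho m u w) 0" using uw r by (auto simp: vt_def)
  show ?thesis
  proof
    assume "nd u w 1 \<in> K"
    then show "nd u (rho m u w) 0 \<in> K" using clo_A[OF R v1 K] by (simp add: aP_def)
  next
    assume "nd u (rho m u w) 0 \<in> K"
    then show "nd u w 1 \<in> K" using clo_A[OF R v0 K] r by (simp add: aP_def)
  qed
qed

lemma clo_X_iff: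
  assumes R: "adj_rel ef S = rel m X \<union> rel m (aP m)" and v: "vt m u w s"
    and K: "K = comp ef S x0"
    and Xs: "X u w s = nd w u t" "X w u t = nd u w s" "t < 2"
  shows "nd u w s \<in> K \<longleftrightarrow> nd w u t \<in> K"
proof
  assume "nd u w s \<in> K" then show "nd w u t \<in> K" using clo_X[OF R v K] Xs by simp
next
  have v2: "vt m w u t" using v Xs by (auto simp: vt_def)
  assume "nd w u t \<in> K" then show "nd u w s \<in> K" using clo_X[OF R v2 K] Xs by simp
qed

lemma odd_of_bool_add: "odd (of_bool p + of_bool q :: nat) \<longleftrightarrow> p \<noteq> q"
  by (cases p; cases q) auto

lemma face_orth:
  assumes m: "2 \<le> m" and u: "u < m"
    and clo: "\<And>w. w < m \<Longrightarrow> w \<noteq> u \<Longrightarrow> nd u w 1 \<in> K \<longleftrightarrow> nd u (rho m u w) 0 \<in> K"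
    and g: "\<And>w. w < m \<Longrightarrow> w \<noteq> u \<Longrightarrow> g (Sq u w) = of_bool (nd u w 0 \<in> K) + of_bool (nd u w 1 \<in> K)"
  shows "even (card ({s \<in> squares (MM m). odd (g s)} \<inter> {s \<in> squares (MM m). odd (ginc (GM m) s (Vx m u))}))"
proof -
  define W where "W = {w. w < m \<and> w \<noteq> u \<and> odd (g (Sq u w))}"
  define A0 where "A0 = {w. w < m \<and> w \<noteq> u \<and> nd u w 0 \<in> K}"
  define A1 where "A1 = {w. w < m \<and> w \<noteq> u \<and> nd u w 1 \<in> K}"
  have eq1: "{s \<in> squares (MM m). odd (g s)} \<inter> {s \<in> squares (MM m). odd (ginc (GM m) s (Vx m u))} = Sq u ` W"
  proof (intro set_eqI iffI)
    fix s assume "s \<in> {s \<in> squares (MM m). odd (g s)} \<inter> {s \<in> squares (MM m). odd (ginc (GM m) s (Vx m u))}"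
    then obtain a b where s: "s = Sq a b" "a < b" "b < m" and o1: "odd (g s)" and o2: "odd (ginc (GM m) s (Vx m u))"
      unfolding squares_MM by auto
    have "ginc (GM m) s (Vx m u) = (if u = a \<or> u = b then 1 else 0)"
      using ginc_M[of a m b u] s u by simp
    then have "u = a \<or> u = b" using o2 by (auto split: if_splits)
    then show "s \<in> Sq u ` W"
    proof
      assume "u = a" then show ?thesis using s o1 unfolding W_def by auto
    next
      assume "u = b" then show ?thesis using s o1 Sq_sym[of a b] unfolding W_def by auto
    qed
  next
    fix s assume "s \<in> Sq u ` W"
    then obtain w where w: "w < m" "w \<noteq> u" "odd (g (Sq u w))" and s: "s = Sq u w" unfolding W_def by auto
    have sq: "Sq u w \<in> squares (MM m)"
    proof (cases "u < w")
      case True then show ?thesis unfolding squares_MM using w by blast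
    next
      case False then have "w < u" using w by auto
      then show ?thesis unfolding squares_MM using u Sq_sym[of u w] by blast
    qed
    have "ginc (GM m) (Sq u w) (Vx m u) = 1" using ginc_M[of u m w u] w u by simp
    then show "s \<in> {s \<in> squares (MM m). odd (g s)} \<inter> {s \<in> squares (MM m). odd (ginc (GM m) s (Vx m u))}"
      using s sq w by simp
  qed
  have inj: "inj_on (Sq u) W"
  proof (rule inj_onI)
    fix w w' assume "w \<in> W" "w' \<in> W" "Sq u w = Sq u w'"
    then show "w = w'" unfolding W_def by (auto simp: Sq_eq)
  qed
  have W_eq: "W = symdiff A0 A1"
  proof (intro set_eqI)
    fix w
    show "w \<in> W \<longleftrightarrow> w \<in> symdiff A0 A1"
    proof (cases "w < m \<and> w \<noteq> u")
      case True
      then have "odd (g (Sq u w)) \<longleftrightarrow> (nd u w 0 \<in> K) \<noteq> (nd u w 1 \<in> K)"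
        using g[of w] odd_of_bool_add by simp
      then show ?thesis unfolding W_def A0_def A1_def symdiff_mem using True by simp
    next
      case False
      then show ?thesis unfolding W_def A0_def A1_def symdiff_mem by auto
    qed
  qed
  have fin: "finite A0" "finite A1" unfolding A0_def A1_def by auto
  have A01: "A0 = rho m u ` A1"
  proof (intro set_eqI iffI)
    fix w assume "w \<in> A0"
    then have w: "w < m" "w \<noteq> u" "nd u w 0 \<in> K" unfolding A0_def by auto
    note r = rinv_props[OF m u w(1,2)]
    have "nd u (rinv m u w) 1 \<in> K" using clo[of "rinv m u w"] r w by simp
    then have "rinv m u w \<in> A1" unfolding A1_def using r by simp
    then show "w \<in> rho m u ` A1" using r by (metis image_eqI)
  next
    fix w assume "w \<in> rho m u ` A1"
    then obtain w' where w': "w' < m" "w' \<noteq> u" "nd u w' 1 \<in> K" "w = rho m u w'" unfolding A1_def by auto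
    note r = rho_props[OF m u w'(1,2)]
    show "w \<in> A0" unfolding A0_def using clo[of w'] w' r by simp
  qed
  have "inj_on (rho m u) A1"
  proof (rule inj_onI)
    fix a b assume "a \<in> A1" "b \<in> A1" "rho m u a = rho m u b"
    then have ab: "a < m" "a \<noteq> u" "b < m" "b \<noteq> u" "rho m u a = rho m u b" unfolding A1_def by auto
    have "a = rinv m u (rho m u a)" using rho_props(3)[OF m u ab(1,2)] by simp
    also have "\<dots> = rinv m u (rho m u b)" using ab(5) by simp
    also have "\<dots> = b" using rho_props(3)[OF m u ab(3,4)] by simp
    finally show "a = b" .
  qed
  then have "card A0 = card A1" using A01 card_image by blast
  then have "even (card W)" unfolding W_eq using card_symdiff_parity[OF fin] by simp
  then show ?thesis unfolding eq1 using card_image[OF inj] by simp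
qed


lemma en_eF: "u \<noteq> w \<Longrightarrow> s < 2 \<Longrightarrow> en m (eF u w s) = {nd u w s, nd w u (fp u w s)}"
  unfolding eF_def by (auto simp: insert_commute)

lemma card_two_cond: "a \<noteq> b \<Longrightarrow> card ((if p then {a} else {}) \<union> (if q then {b} else {})) = of_bool p + of_bool q"
  by (cases p; cases q) auto

lemma ginc_D:
  assumes m: "2 \<le> m" and uw: "u < m" "w < m" "u \<noteq> w" and K: "K = comp (en m) (FE m \<union> AE m) x0"
  shows "ginc (GD m) (Sq u w) K = of_bool (nd u w 0 \<in> K) + of_bool (nd u w 1 \<in> K)"
proof -
  note R = adjD[OF m]
  have cloF: "nd u w s \<in> K \<longleftrightarrow> nd w u (fp u w s) \<in> K" if "s < 2" for s
    using clo_X_iff[OF R _ K, of u w s "fp u w s"] that uw by (simp add: vt_def fP_def)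
  have "{e \<in> FE m. en m e \<subseteq> Sq u w \<and> en m e \<subseteq> K} =
        (if nd u w 0 \<in> K then {eF u w 0} else {}) \<union> (if nd u w 1 \<in> K then {eF u w 1} else {})"
    (is "?L = ?R")
  proof (intro set_eqI iffI)
    fix e assume "e \<in> ?L"
    then obtain a b t where e: "e = eid 2 a b t" "a < b" "b < m" "t < 2"
      and sub: "{nd a b t, nd b a (fp a b t)} \<subseteq> Sq u w" "{nd a b t, nd b a (fp a b t)} \<subseteq> K"
      unfolding FE_def by auto
    from sub(1) have "(a = u \<and> b = w) \<or> (a = w \<and> b = u)" by (simp add: nd_in_Sq)
    then show "e \<in> ?R"
    proof
      assume ab: "a = u \<and> b = w"
      then have "e = eF u w t" "nd u w t \<in> K" using e sub by (auto simp: eF_def)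
      then show ?thesis using e(4) by (auto dest!: s_cases)
    next
      assume ab: "a = w \<and> b = u"
      define s' where "s' = fp u w t"
      have s': "s' < 2" "fp u w s' = t" using e(4) unfolding s'_def by auto
      have "e = eF u w s'" using e ab s' by (auto simp: eF_def)
      moreover have "nd u w s' \<in> K" using sub(2) ab unfolding s'_def by simp
      ultimately show ?thesis using s'(1) by (auto dest!: s_cases)
    qed
  next
    fix e assume "e \<in> ?R"
    then have "(e = eF u w 0 \<and> nd u w 0 \<in> K) \<or> (e = eF u w 1 \<and> nd u w 1 \<in> K)" by (auto split: if_splits)
    then obtain s where s: "s < 2" "e = eF u w s" "nd u w s \<in> K"
    proof (elim disjE)
      assume "e = eF u w 0 \<and> nd u w 0 \<in> K" then show thesis using that[of 0] by simp
    next
      assume "e = eF u w 1 \<and> nd u w 1 \<in> K" then show thesis using that[of 1] by simp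
    qed
    have v: "vt m u w s" using uw s by (auto simp: vt_def)
    have "e \<in> FE m" using eAF_mem[OF v m] s by simp
    moreover have "en m e \<subseteq> Sq u w" using en_eF[OF uw(3) s(1)] s by (simp add: nd_in_Sq)
    moreover have "en m e \<subseteq> K" using en_eF[OF uw(3) s(1)] s cloF[OF s(1)] by simp
    ultimately show "e \<in> ?L" by simp
  qed
  moreover have "eF u w 0 \<noteq> eF u w 1" unfolding eF_def fp_def by auto
  ultimately show ?thesis unfolding GD_simps using card_two_cond by simp
qed

lemma ginc_P:
  assumes m: "2 \<le> m" and uw: "u < m" "w < m" "u \<noteq> w"
    and K: "K = comp (qends (MM m)) (Inr ` zdiag (MM m) \<union> Inl ` AE m) x0"
  shows "ginc (GP m) (Sq u w) K = of_bool (nd u w 0 \<in> K) + of_bool (nd u w 1 \<in> K)"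
proof -
  note R = adjP[OF m]
  have cloZ: "nd u w s \<in> K \<longleftrightarrow> nd w u (zp u w s) \<in> K" if "s < 2" for s
    using clo_X_iff[OF R _ K, of u w s "zp u w s"] that uw by (simp add: vt_def zP_def)
  have "{e \<in> Inr ` zdiag (MM m). qends (MM m) e \<subseteq> Sq u w \<and> qends (MM m) e \<subseteq> K} =
        (if nd u w 0 \<in> K then {Inr {nd u w 0, zP u w 0}} else {}) \<union>
        (if nd u w 1 \<in> K then {Inr {nd u w 1, zP u w 1}} else {})"
    (is "?L = ?R")
  proof (intro set_eqI iffI)
    fix e assume "e \<in> ?L"
    then obtain a b t where e: "e = Inr {nd a b t, zP a b t}" "vt m a b t"
      and sub: "{nd a b t, zP a b t} \<subseteq> Sq u w" "{nd a b t, zP a b t} \<subseteq> K"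
      unfolding zdiag_MM qends_def by auto
    from sub(1) have "(a = u \<and> b = w) \<or> (a = w \<and> b = u)" by (simp add: nd_in_Sq)
    then show "e \<in> ?R"
    proof
      assume ab: "a = u \<and> b = w"
      then show ?thesis using e sub by (auto simp: vt_def dest!: s_cases)
    next
      assume ab: "a = w \<and> b = u"
      define s' where "s' = zp u w t"
      have t2: "t < 2" using e(2) by (simp add: vt_def)
      have s': "s' < 2" "zp u w s' = t" using t2 unfolding s'_def by auto
      have z1: "zP a b t = nd u w s'" using ab unfolding zP_def s'_def by simp
      have z2: "zP u w s' = nd a b t" using ab s'(2) unfolding zP_def by simp
      have "{nd a b t, zP a b t} = {nd u w s', zP u w s'}"
        unfolding z1 z2 by (rule insert_commute)
      then have e': "e = Inr {nd u w s', zP u w s'}" using e(1) by simp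
      have K': "nd u w s' \<in> K" using sub(2) z1 by simp
      from s_cases[OF s'(1)] show ?thesis
      proof
        assume "s' = 0" then show ?thesis using e' K' by simp
      next
        assume "s' = 1" then show ?thesis using e' K' by simp
      qed
    qed
  next
    fix e assume "e \<in> ?R"
    then have "(e = Inr {nd u w 0, zP u w 0} \<and> nd u w 0 \<in> K) \<or> (e = Inr {nd u w 1, zP u w 1} \<and> nd u w 1 \<in> K)" by (auto split: if_splits)
    then obtain s where s: "s < 2" "e = Inr {nd u w s, zP u w s}" "nd u w s \<in> K"
    proof (elim disjE)
      assume "e = Inr {nd u w 0, zP u w 0} \<and> nd u w 0 \<in> K" then show thesis using that[of 0] by simp
    next
      assume "e = Inr {nd u w 1, zP u w 1} \<and> nd u w 1 \<in> K" then show thesis using that[of 1] by simp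
    qed
    have v: "vt m u w s" using uw s by (auto simp: vt_def)
    have "{nd u w s, zP u w s} \<in> zdiag (MM m)" unfolding zdiag_MM using v by blast
    moreover have "{nd u w s, zP u w s} \<subseteq> Sq u w" using s by (simp add: nd_in_Sq zP_def)
    moreover have "{nd u w s, zP u w s} \<subseteq> K" using s cloZ[OF s(1)] by (simp add: zP_def)
    ultimately show "e \<in> ?L" using s(2) by (simp add: qends_def)
  qed
  moreover have "Inr {nd u w 0, zP u w 0} \<noteq> (Inr {nd u w 1, zP u w 1} :: nat + nat set)"
    using uw(3) by (auto simp: zP_def doubleton_eq_iff)
  ultimately show ?thesis unfolding GP_simps using card_two_cond by simp
qed


lemma cob_single: "coboundary G {K} = {s \<in> gedges G. odd (ginc G s K)}"
  unfolding coboundary_def by simp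

lemma step1_D:
  assumes m: "2 \<le> m" and K: "K \<in> gverts (GD m)" and u: "u < m"
  shows "even (card (coboundary (GD m) {K} \<inter> coboundary (GM m) {Vx m u}))"
proof -
  obtain x0 where K0: "K = comp (en m) (FE m \<union> AE m) x0" using K unfolding GD_simps by auto
  have "even (card ({s \<in> squares (MM m). odd (ginc (GD m) s K)} \<inter>
                    {s \<in> squares (MM m). odd (ginc (GM m) s (Vx m u))}))"
  proof (rule face_orth[OF m u])
    fix w assume "w < m" "w \<noteq> u"
    then show "nd u w 1 \<in> K \<longleftrightarrow> nd u (rho m u w) 0 \<in> K"
      using clo_A_iff[OF m adjD[OF m] K0 u] by simp
    show "ginc (GD m) (Sq u w) K = of_bool (nd u w 0 \<in> K) + of_bool (nd u w 1 \<in> K)"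
      using ginc_D[OF m u \<open>w < m\<close> _ K0] \<open>w \<noteq> u\<close> by simp
  qed
  then show ?thesis unfolding cob_single GD_simps gedges_M .
qed

lemma step1_P:
  assumes m: "2 \<le> m" and K: "K \<in> gverts (GP m)" and u: "u < m"
  shows "even (card (coboundary (GP m) {K} \<inter> coboundary (GM m) {Vx m u}))"
proof -
  obtain x0 where K0: "K = comp (qends (MM m)) (Inr ` zdiag (MM m) \<union> Inl ` AE m) x0"
    using K unfolding GP_simps by auto
  have "even (card ({s \<in> squares (MM m). odd (ginc (GP m) s K)} \<inter>
                    {s \<in> squares (MM m). odd (ginc (GM m) s (Vx m u))}))"
  proof (rule face_orth[OF m u])
    fix w assume "w < m" "w \<noteq> u"
    then show "nd u w 1 \<in> K \<longleftrightarrow> nd u (rho m u w) 0 \<in> K"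
      using clo_A_iff[OF m adjP[OF m] K0 u] by simp
    show "ginc (GP m) (Sq u w) K = of_bool (nd u w 0 \<in> K) + of_bool (nd u w 1 \<in> K)"
      using ginc_P[OF m u \<open>w < m\<close> _ K0] \<open>w \<noteq> u\<close> by simp
  qed
  then show ?thesis unfolding cob_single GP_simps gedges_M .
qed

lemma finite_gverts_D: "finite (gverts (GD m))" unfolding GD_simps using finite_NN by simp
lemma finite_gverts_P: "finite (gverts (GP m))" unfolding GP_simps using finite_NN by simp
lemma finite_gverts_M: "finite (gverts (GM m))" unfolding Gof_def using finite_NN by simp

lemma orth_assembly:
  assumes m: "2 \<le> m" and finX: "finite (gverts X)" and eX: "gedges X = squares (MM m)"
    and step1: "\<And>K u. K \<in> gverts X \<Longrightarrow> u < m \<Longrightarrow> even (card (coboundary X {K} \<inter> coboundary (GM m) {Vx m u}))"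
    and U: "U \<subseteq> gverts X" and W: "W \<subseteq> gverts (GM m)"
  shows "even (card (coboundary X U \<inter> coboundary (GM m) W))"
proof -
  have fs: "finite (squares (MM m))" by (rule finite_squares)
  have fU: "finite U" using finite_subset[OF U finX] .
  have fW: "finite W" using finite_subset[OF W finite_gverts_M] .
  have step2: "even (card (coboundary (GM m) W \<inter> coboundary X {K}))" if K: "K \<in> gverts X" for K
  proof (rule even_cob_Int[OF fW])
    show "finite (coboundary X {K})" using cob_sub[of X "{K}"] eX fs finite_subset by metis
  next
    fix K' assume "K' \<in> W"
    then obtain u where u: "u < m" "K' = Vx m u" using W unfolding gverts_M[OF m] by auto
    show "even (card (coboundary (GM m) {K'} \<inter> coboundary X {K}))"
      using step1[OF K u(1)] u(2) by (simp add: Int_commute)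
  qed
  show ?thesis
  proof (rule even_cob_Int[OF fU])
    show "finite (coboundary (GM m) W)" using cob_sub[of "GM m" W] gedges_M fs finite_subset by metis
  next
    fix K assume "K \<in> U"
    then show "even (card (coboundary X {K} \<inter> coboundary (GM m) W))"
      using step2[of K] U by (auto simp: Int_commute)
  qed
qed

lemma FZ_sub_orth:
  assumes m: "2 \<le> m"
  shows "space_sum (cob_space (GD m)) (cob_space (GP m)) \<subseteq> orth (squares (MM m)) (cob_space (GM m))"
proof
  fix x assume "x \<in> space_sum (cob_space (GD m)) (cob_space (GP m))"
  then obtain a b where x0: "x = symdiff a b" and a: "a \<in> cob_space (GD m)" and b: "b \<in> cob_space (GP m)"
    unfolding space_sum_def by blast
  from a obtain U where U: "U \<subseteq> gverts (GD m)" and aU: "a = coboundary (GD m) U"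
    unfolding cob_space_def by blast
  from b obtain U' where U': "U' \<subseteq> gverts (GP m)" and bU: "b = coboundary (GP m) U'"
    unfolding cob_space_def by blast
  have x: "x = symdiff (coboundary (GD m) U) (coboundary (GP m) U')" using x0 aU bU by simp
  have sub: "x \<subseteq> squares (MM m)"
    using x symdiff_sub[of "coboundary (GD m) U" "coboundary (GP m) U'"] cob_sub[of "GD m" U] cob_sub[of "GP m" U']
    unfolding GD_simps GP_simps by blast
  have ev: "even (card (x \<inter> T))" if T: "T \<in> cob_space (GM m)" for T
  proof -
    obtain W where W: "W \<subseteq> gverts (GM m)" and TW: "T = coboundary (GM m) W"
      using T unfolding cob_space_def by blast
    have fT: "finite T" using TW cob_sub[of "GM m" W] gedges_M finite_squares finite_subset by metis
    have e1: "even (card (coboundary (GD m) U \<inter> T))"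
      unfolding TW by (rule orth_assembly[OF m finite_gverts_D GD_simps(1) step1_D[OF m] U W])
    have e2: "even (card (coboundary (GP m) U' \<inter> T))"
      unfolding TW by (rule orth_assembly[OF m finite_gverts_P GP_simps(1) step1_P[OF m] U' W])
    show ?thesis unfolding x by (rule even_symdiff_Int[OF fT e1 e2])
  qed
  show "x \<in> orth (squares (MM m)) (cob_space (GM m))"
    unfolding orth_def using sub ev by blast
qed


lemma rel_closed:
  assumes "(y, z) \<in> rel m P" "y \<in> A" "\<And>u w s. vt m u w s \<Longrightarrow> nd u w s \<in> A \<Longrightarrow> P u w s \<in> A"
  shows "z \<in> A"
  using assms by (auto elim!: relE)

definition L8 :: "nat \<Rightarrow> nat \<Rightarrow> nat set" where
  "L8 a b = {nd a b 1, nd b a 1, nd b (a+1) 0, nd (a+1) b 1, nd (a+1) (b+1) 0, nd (b+1) (a+1) 0,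
             nd (b+1) a 1, nd a (b+1) 0}"

lemma aP_L8:
  assumes "a + 1 < b" "b + 1 < m"
  shows "aP m a b 1 = nd a (b+1) 0" "aP m b a 1 = nd b (a+1) 0" "aP m b (a+1) 0 = nd b a 1"
    "aP m (a+1) b 1 = nd (a+1) (b+1) 0" "aP m (a+1) (b+1) 0 = nd (a+1) b 1"
    "aP m (b+1) (a+1) 0 = nd (b+1) a 1" "aP m (b+1) a 1 = nd (b+1) (a+1) 0"
    "aP m a (b+1) 0 = nd a b 1"
  using assms unfolding aP_def rho_def rinv_def by auto

lemma comp_L8:
  assumes R: "adj_rel ef S = rel m X \<union> rel m (aP m)" and ab: "a + 1 < b" "b + 1 < m"
    and X: "X a b 1 = nd b a 1" "X b a 1 = nd a b 1" "X b (a+1) 0 = nd (a+1) b 1" "X (a+1) b 1 = nd b (a+1) 0"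
      "X (a+1) (b+1) 0 = nd (b+1) (a+1) 0" "X (b+1) (a+1) 0 = nd (a+1) (b+1) 0"
      "X (b+1) a 1 = nd a (b+1) 0" "X a (b+1) 0 = nd (b+1) a 1"
  shows "comp ef S (nd a b 1) = L8 a b"
proof
  note A = aP_L8[OF ab]
  show "comp ef S (nd a b 1) \<subseteq> L8 a b"
  proof (rule comp_rel_sub[OF R])
    show "nd a b 1 \<in> L8 a b" unfolding L8_def by simp
  next
    fix y z assume yz: "(y, z) \<in> rel m X \<union> rel m (aP m)" and y: "y \<in> L8 a b"
    show "z \<in> L8 a b"
    proof (cases "(y, z) \<in> rel m X")
      case True
      show ?thesis
      proof (rule rel_closed[OF True y])
        fix u w s assume "vt m u w s" "nd u w s \<in> L8 a b"
        then show "X u w s \<in> L8 a b" unfolding L8_def using X by auto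
      qed
    next
      case False
      then have "(y, z) \<in> rel m (aP m)" using yz by simp
      then show ?thesis
      proof (rule rel_closed[OF _ y])
        fix u w s assume "vt m u w s" "nd u w s \<in> L8 a b"
        then show "aP m u w s \<in> L8 a b" unfolding L8_def using A by auto
      qed
    qed
  qed
next
  note A = aP_L8[OF ab]
  let ?C = "comp ef S (nd a b 1)"
  have step: "nd u w s \<in> ?C \<Longrightarrow> vt m u w s \<Longrightarrow> X u w s \<in> ?C \<and> aP m u w s \<in> ?C" for u w s
  proof -
    assume h: "nd u w s \<in> ?C" "vt m u w s"
    show ?thesis using comp_rel_mem[OF R h(1)] relI[OF h(2), of X] relI[OF h(2), of "aP m"] by auto
  qed
  have v: "vt m a b 1" "vt m b a 1" "vt m b (a+1) 0" "vt m (a+1) b 1" "vt m (a+1) (b+1) 0"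
    "vt m (b+1) (a+1) 0" "vt m (b+1) a 1" using ab by (auto simp: vt_def)
  have 1: "nd a b 1 \<in> ?C" by (rule comp_self)
  have 2: "nd b a 1 \<in> ?C" using step[OF 1 v(1)] X by simp
  have 3: "nd b (a+1) 0 \<in> ?C" using step[OF 2 v(2)] A by simp
  have 4: "nd (a+1) b 1 \<in> ?C" using step[OF 3 v(3)] X by simp
  have 5: "nd (a+1) (b+1) 0 \<in> ?C" using step[OF 4 v(4)] A by simp
  have 6: "nd (b+1) (a+1) 0 \<in> ?C" using step[OF 5 v(5)] X by simp
  have 7: "nd (b+1) a 1 \<in> ?C" using step[OF 6 v(6)] A by simp
  have 8: "nd a (b+1) 0 \<in> ?C" using step[OF 7 v(7)] X by simp
  show "L8 a b \<subseteq> ?C" unfolding L8_def using 1 2 3 4 5 6 7 8 by simp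
qed

definition L6 :: "nat \<Rightarrow> nat set" where
  "L6 a = {nd a (a+1) 1, nd (a+1) a 1, nd (a+1) (a+2) 0, nd (a+2) (a+1) 0, nd (a+2) a 1, nd a (a+2) 0}"

lemma aP_L6:
  assumes "a + 2 < m"
  shows "aP m a (a+1) 1 = nd a (a+2) 0" "aP m (a+1) a 1 = nd (a+1) (a+2) 0"
    "aP m (a+1) (a+2) 0 = nd (a+1) a 1" "aP m (a+2) (a+1) 0 = nd (a+2) a 1"
    "aP m (a+2) a 1 = nd (a+2) (a+1) 0" "aP m a (a+2) 0 = nd a (a+1) 1"
  using assms unfolding aP_def rho_def rinv_def by auto

lemma comp_L6:
  assumes R: "adj_rel ef S = rel m X \<union> rel m (aP m)" and a: "a + 2 < m"
    and X: "X a (a+1) 1 = nd (a+1) a 1" "X (a+1) a 1 = nd a (a+1) 1"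
      "X (a+1) (a+2) 0 = nd (a+2) (a+1) 0" "X (a+2) (a+1) 0 = nd (a+1) (a+2) 0"
      "X (a+2) a 1 = nd a (a+2) 0" "X a (a+2) 0 = nd (a+2) a 1"
  shows "comp ef S (nd a (a+1) 1) = L6 a"
proof
  note A = aP_L6[OF a]
  show "comp ef S (nd a (a+1) 1) \<subseteq> L6 a"
  proof (rule comp_rel_sub[OF R])
    show "nd a (a+1) 1 \<in> L6 a" unfolding L6_def by simp
  next
    fix y z assume yz: "(y, z) \<in> rel m X \<union> rel m (aP m)" and y: "y \<in> L6 a"
    show "z \<in> L6 a"
    proof (cases "(y, z) \<in> rel m X")
      case True
      show ?thesis
      proof (rule rel_closed[OF True y])
        fix u w s assume "vt m u w s" "nd u w s \<in> L6 a"
        then show "X u w s \<in> L6 a" unfolding L6_def using X by auto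
      qed
    next
      case False
      then have "(y, z) \<in> rel m (aP m)" using yz by simp
      then show ?thesis
      proof (rule rel_closed[OF _ y])
        fix u w s assume "vt m u w s" "nd u w s \<in> L6 a"
        then show "aP m u w s \<in> L6 a" unfolding L6_def using A by auto
      qed
    qed
  qed
next
  note A = aP_L6[OF a]
  let ?C = "comp ef S (nd a (a+1) 1)"
  have step: "nd u w s \<in> ?C \<Longrightarrow> vt m u w s \<Longrightarrow> X u w s \<in> ?C \<and> aP m u w s \<in> ?C" for u w s
  proof -
    assume h: "nd u w s \<in> ?C" "vt m u w s"
    show ?thesis using comp_rel_mem[OF R h(1)] relI[OF h(2), of X] relI[OF h(2), of "aP m"] by auto
  qed
  have v: "vt m a (a+1) 1" "vt m (a+1) a 1" "vt m (a+1) (a+2) 0" "vt m (a+2) (a+1) 0" "vt m (a+2) a 1"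
    using a by (auto simp: vt_def)
  have 1: "nd a (a+1) 1 \<in> ?C" by (rule comp_self)
  have 2: "nd (a+1) a 1 \<in> ?C" using step[OF 1 v(1)] X by simp
  have 3: "nd (a+1) (a+2) 0 \<in> ?C" using step[OF 2 v(2)] A by simp
  have 4: "nd (a+2) (a+1) 0 \<in> ?C" using step[OF 3 v(3)] X by simp
  have 5: "nd (a+2) a 1 \<in> ?C" using step[OF 4 v(4)] A by simp
  have 6: "nd a (a+2) 0 \<in> ?C" using step[OF 5 v(5)] X by simp
  show "L6 a \<subseteq> ?C" unfolding L6_def using 1 2 3 4 5 6 by simp
qed


abbreviation SP where "SP m \<equiv> space_sum (cob_space (GD m)) (cob_space (GP m))"

lemma cob_formula:
  assumes eX: "gedges X = squares (MM m)"
    and g: "\<And>u w. u < m \<Longrightarrow> w < m \<Longrightarrow> u \<noteq> w \<Longrightarrow> ginc X (Sq u w) K = of_bool (nd u w 0 \<in> K) + of_bool (nd u w 1 \<in> K)"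
  shows "coboundary X {K} = {Sq u w | u w. u < w \<and> w < m \<and> (nd u w 0 \<in> K) \<noteq> (nd u w 1 \<in> K)}"
proof (intro set_eqI iffI)
  fix s assume "s \<in> coboundary X {K}"
  then obtain u w where s: "s = Sq u w" "u < w" "w < m" and o: "odd (ginc X s K)"
    unfolding cob_single eX squares_MM by auto
  have "(nd u w 0 \<in> K) \<noteq> (nd u w 1 \<in> K)" using o g[of u w] s odd_of_bool_add by auto
  then show "s \<in> {Sq u w | u w. u < w \<and> w < m \<and> (nd u w 0 \<in> K) \<noteq> (nd u w 1 \<in> K)}" using s by blast
next
  fix s assume "s \<in> {Sq u w | u w. u < w \<and> w < m \<and> (nd u w 0 \<in> K) \<noteq> (nd u w 1 \<in> K)}"
  then obtain u w where s: "s = Sq u w" "u < w" "w < m" and x: "(nd u w 0 \<in> K) \<noteq> (nd u w 1 \<in> K)"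
    by blast
  have "odd (ginc X s K)" using g[of u w] s x odd_of_bool_add by auto
  moreover have "s \<in> squares (MM m)" unfolding squares_MM using s by blast
  ultimately show "s \<in> coboundary X {K}" unfolding cob_single eX by simp
qed

lemma L8_mem:
  assumes "u < w" "a + 1 < b"
  shows "nd u w 1 \<in> L8 a b \<longleftrightarrow> (u = a \<and> w = b) \<or> (u = a + 1 \<and> w = b)"
    "nd u w 0 \<in> L8 a b \<longleftrightarrow> (u = a + 1 \<and> w = b + 1) \<or> (u = a \<and> w = b + 1)"
  using assms unfolding L8_def by auto

lemma L6_mem:
  assumes "u < w"
  shows "nd u w 1 \<in> L6 a \<longleftrightarrow> (u = a \<and> w = a + 1)"
    "nd u w 0 \<in> L6 a \<longleftrightarrow> (u = a + 1 \<and> w = a + 2) \<or> (u = a \<and> w = a + 2)"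
  using assms unfolding L6_def by auto

lemma Q8_set:
  assumes ab: "a + 1 < b" "b + 1 < m"
  shows "{Sq u w | u w. u < w \<and> w < m \<and> (nd u w 0 \<in> L8 a b) \<noteq> (nd u w 1 \<in> L8 a b)}
         = {Sq a b, Sq (a+1) b, Sq (a+1) (b+1), Sq a (b+1)}"
proof (intro set_eqI iffI)
  fix s assume "s \<in> {Sq u w | u w. u < w \<and> w < m \<and> (nd u w 0 \<in> L8 a b) \<noteq> (nd u w 1 \<in> L8 a b)}"
  then obtain u w where s: "s = Sq u w" "u < w" "w < m" and x: "(nd u w 0 \<in> L8 a b) \<noteq> (nd u w 1 \<in> L8 a b)"
    by blast
  have "(u = a \<and> w = b) \<or> (u = a + 1 \<and> w = b) \<or> (u = a + 1 \<and> w = b + 1) \<or> (u = a \<and> w = b + 1)"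
    using x unfolding L8_mem[OF s(2) ab(1)] by blast
  then show "s \<in> {Sq a b, Sq (a+1) b, Sq (a+1) (b+1), Sq a (b+1)}" using s by auto
next
  fix s assume s: "s \<in> {Sq a b, Sq (a+1) b, Sq (a+1) (b+1), Sq a (b+1)}"
  have 1: "Sq a b \<in> {Sq u w | u w. u < w \<and> w < m \<and> (nd u w 0 \<in> L8 a b) \<noteq> (nd u w 1 \<in> L8 a b)}"
  proof -
    have lt: "a < b" using ab by simp
    have "a < b" "b < m" "(nd a b 0 \<in> L8 a b) \<noteq> (nd a b 1 \<in> L8 a b)" using ab L8_mem[OF lt ab(1)] by auto
    then show ?thesis by blast
  qed
  have 2: "Sq (a+1) b \<in> {Sq u w | u w. u < w \<and> w < m \<and> (nd u w 0 \<in> L8 a b) \<noteq> (nd u w 1 \<in> L8 a b)}"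
  proof -
    have lt: "a + 1 < b" using ab by simp
    have "a + 1 < b" "b < m" "(nd (a+1) b 0 \<in> L8 a b) \<noteq> (nd (a+1) b 1 \<in> L8 a b)" using ab L8_mem[OF lt ab(1)] by auto
    then show ?thesis by blast
  qed
  have 3: "Sq (a+1) (b+1) \<in> {Sq u w | u w. u < w \<and> w < m \<and> (nd u w 0 \<in> L8 a b) \<noteq> (nd u w 1 \<in> L8 a b)}"
  proof -
    have "a + 1 < b + 1" "b + 1 < m" "(nd (a+1) (b+1) 0 \<in> L8 a b) \<noteq> (nd (a+1) (b+1) 1 \<in> L8 a b)"
      using ab L8_mem[of "a+1" "b+1" a b] by auto
    then show ?thesis by blast
  qed
  have 4: "Sq a (b+1) \<in> {Sq u w | u w. u < w \<and> w < m \<and> (nd u w 0 \<in> L8 a b) \<noteq> (nd u w 1 \<in> L8 a b)}"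
  proof -
    have "a < b + 1" "b + 1 < m" "(nd a (b+1) 0 \<in> L8 a b) \<noteq> (nd a (b+1) 1 \<in> L8 a b)"
      using ab L8_mem[of a "b+1" a b] by auto
    then show ?thesis by blast
  qed
  show "s \<in> {Sq u w | u w. u < w \<and> w < m \<and> (nd u w 0 \<in> L8 a b) \<noteq> (nd u w 1 \<in> L8 a b)}"
    using s 1 2 3 4 by blast
qed

lemma Q6_set:
  assumes a: "a + 2 < m"
  shows "{Sq u w | u w. u < w \<and> w < m \<and> (nd u w 0 \<in> L6 a) \<noteq> (nd u w 1 \<in> L6 a)}
         = {Sq a (a+1), Sq (a+1) (a+2), Sq a (a+2)}"
proof (intro set_eqI iffI)
  fix s assume "s \<in> {Sq u w | u w. u < w \<and> w < m \<and> (nd u w 0 \<in> L6 a) \<noteq> (nd u w 1 \<in> L6 a)}"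
  then obtain u w where s: "s = Sq u w" "u < w" "w < m" and x: "(nd u w 0 \<in> L6 a) \<noteq> (nd u w 1 \<in> L6 a)"
    by blast
  have "(u = a \<and> w = a + 1) \<or> (u = a + 1 \<and> w = a + 2) \<or> (u = a \<and> w = a + 2)"
    using x unfolding L6_mem[OF s(2)] by blast
  then show "s \<in> {Sq a (a+1), Sq (a+1) (a+2), Sq a (a+2)}" using s by auto
next
  fix s assume s: "s \<in> {Sq a (a+1), Sq (a+1) (a+2), Sq a (a+2)}"
  have 1: "Sq a (a+1) \<in> {Sq u w | u w. u < w \<and> w < m \<and> (nd u w 0 \<in> L6 a) \<noteq> (nd u w 1 \<in> L6 a)}"
  proof -
    have "a < a + 1" "a + 1 < m" "(nd a (a+1) 0 \<in> L6 a) \<noteq> (nd a (a+1) 1 \<in> L6 a)" using a L6_mem[of a "a+1" a] by auto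
    then show ?thesis by blast
  qed
  have 2: "Sq (a+1) (a+2) \<in> {Sq u w | u w. u < w \<and> w < m \<and> (nd u w 0 \<in> L6 a) \<noteq> (nd u w 1 \<in> L6 a)}"
  proof -
    have "a + 1 < a + 2" "a + 2 < m" "(nd (a+1) (a+2) 0 \<in> L6 a) \<noteq> (nd (a+1) (a+2) 1 \<in> L6 a)"
      using a L6_mem[of "a+1" "a+2" a] by auto
    then show ?thesis by blast
  qed
  have 3: "Sq a (a+2) \<in> {Sq u w | u w. u < w \<and> w < m \<and> (nd u w 0 \<in> L6 a) \<noteq> (nd u w 1 \<in> L6 a)}"
  proof -
    have "a < a + 2" "a + 2 < m" "(nd a (a+2) 0 \<in> L6 a) \<noteq> (nd a (a+2) 1 \<in> L6 a)" using a L6_mem[of a "a+2" a] by auto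
    then show ?thesis by blast
  qed
  show "s \<in> {Sq u w | u w. u < w \<and> w < m \<and> (nd u w 0 \<in> L6 a) \<noteq> (nd u w 1 \<in> L6 a)}"
    using s 1 2 3 by blast
qed


lemma in_SP_D: "K \<in> gverts (GD m) \<Longrightarrow> coboundary (GD m) {K} \<in> SP m"
  unfolding space_sum_def mem_Collect_eq
  by (rule exI[of _ "coboundary (GD m) {K}"], rule exI[of _ "{}"])
     (simp add: single_cob_space empty_cob_space symdiff_empty)

lemma in_SP_P: "K \<in> gverts (GP m) \<Longrightarrow> coboundary (GP m) {K} \<in> SP m"
  unfolding space_sum_def mem_Collect_eq
  by (rule exI[of _ "{}"], rule exI[of _ "coboundary (GP m) {K}"])
     (simp add: single_cob_space empty_cob_space symdiff_empty)

lemma empty_SP: "{} \<in> SP m"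
  unfolding space_sum_def mem_Collect_eq
  by (rule exI[of _ "{}"], rule exI[of _ "{}"]) (simp add: empty_cob_space symdiff_empty)

lemma SP_symdiff: "x \<in> SP m \<Longrightarrow> y \<in> SP m \<Longrightarrow> symdiff x y \<in> SP m"
  by (rule space_sum_symdiff[OF finite_gverts_D finite_gverts_P])

lemma Q8_SP:
  assumes m: "2 \<le> m" and ab: "a + 1 < b" "b + 1 < m"
  shows "{Sq a b, Sq (a+1) b, Sq (a+1) (b+1), Sq a (b+1)} \<in> SP m"
proof (cases "odd (a + b)")
  case True
  define K where "K = comp (en m) (FE m \<union> AE m) (nd a b 1)"
  have KL: "K = L8 a b" unfolding K_def
    by (rule comp_L8[OF adjD[OF m] ab]) (use True in \<open>simp_all add: fP_def fp_def\<close>)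
  have Kv: "K \<in> gverts (GD m)" unfolding GD_simps K_def using ab by auto
  have "coboundary (GD m) {K} = {Sq u w | u w. u < w \<and> w < m \<and> (nd u w 0 \<in> K) \<noteq> (nd u w 1 \<in> K)}"
    by (rule cob_formula[OF GD_simps(1)]) (rule ginc_D[OF m _ _ _ K_def])
  also have "\<dots> = {Sq a b, Sq (a+1) b, Sq (a+1) (b+1), Sq a (b+1)}" unfolding KL by (rule Q8_set[OF ab])
  finally show ?thesis using in_SP_D[OF Kv] by simp
next
  case False
  define K where "K = comp (qends (MM m)) (Inr ` zdiag (MM m) \<union> Inl ` AE m) (nd a b 1)"
  have KL: "K = L8 a b" unfolding K_def
    by (rule comp_L8[OF adjP[OF m] ab]) (use False in \<open>simp_all add: zP_def zp_def\<close>)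
  have Kv: "K \<in> gverts (GP m)" unfolding GP_simps K_def using ab by auto
  have "coboundary (GP m) {K} = {Sq u w | u w. u < w \<and> w < m \<and> (nd u w 0 \<in> K) \<noteq> (nd u w 1 \<in> K)}"
    by (rule cob_formula[OF GP_simps(1)]) (rule ginc_P[OF m _ _ _ K_def])
  also have "\<dots> = {Sq a b, Sq (a+1) b, Sq (a+1) (b+1), Sq a (b+1)}" unfolding KL by (rule Q8_set[OF ab])
  finally show ?thesis using in_SP_P[OF Kv] by simp
qed

lemma Q6_SP:
  assumes m: "2 \<le> m" and a: "a + 2 < m"
  shows "{Sq a (a+1), Sq (a+1) (a+2), Sq a (a+2)} \<in> SP m"
proof -
  define K where "K = comp (en m) (FE m \<union> AE m) (nd a (a+1) 1)"
  have KL: "K = L6 a" unfolding K_def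
    by (rule comp_L6[OF adjD[OF m] a]) (simp_all add: fP_def fp_def)
  have Kv: "K \<in> gverts (GD m)" unfolding GD_simps K_def using a by auto
  have "coboundary (GD m) {K} = {Sq u w | u w. u < w \<and> w < m \<and> (nd u w 0 \<in> K) \<noteq> (nd u w 1 \<in> K)}"
    by (rule cob_formula[OF GD_simps(1)]) (rule ginc_D[OF m _ _ _ K_def])
  also have "\<dots> = {Sq a (a+1), Sq (a+1) (a+2), Sq a (a+2)}" unfolding KL by (rule Q6_set[OF a])
  finally show ?thesis using in_SP_D[OF Kv] by simp
qed


definition PthS :: "nat \<Rightarrow> nat \<Rightarrow> nat set set" where
  "PthS a b = {Sq k (k+1) | k. a \<le> k \<and> k < b}"

definition SC :: "nat \<Rightarrow> nat \<Rightarrow> nat set set" where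
  "SC a b = symdiff {Sq a b} (PthS a b)"

lemma Sq_eq_lt: "p < q \<Longrightarrow> c < d \<Longrightarrow> Sq p q = Sq c d \<longleftrightarrow> p = c \<and> q = d"
  by (auto simp: Sq_eq)

lemma PthS_mem: "p < q \<Longrightarrow> Sq p q \<in> PthS a b \<longleftrightarrow> q = p + 1 \<and> a \<le> p \<and> p < b"
  unfolding PthS_def by (auto simp: Sq_eq)

definition isSq :: "nat set \<Rightarrow> bool" where "isSq x \<longleftrightarrow> (\<exists>p q. p < q \<and> x = Sq p q)"

lemma Sq_isSq: "c \<noteq> d \<Longrightarrow> isSq (Sq c d)"
  unfolding isSq_def using Sq_sym by (cases "c < d") (auto, metis linorder_neqE_nat)

lemma PthS_isSq: "x \<in> PthS a b \<Longrightarrow> isSq x"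
  unfolding PthS_def isSq_def by auto

lemma SC_1: "SC a (a+1) = {}"
proof -
  have "PthS a (a+1) = {Sq a (a+1)}" unfolding PthS_def
  proof (intro set_eqI iffI)
    fix x assume "x \<in> {Sq k (k+1) | k. a \<le> k \<and> k < a + 1}"
    then obtain k where "x = Sq k (k+1)" "a \<le> k" "k < a + 1" by auto
    moreover then have "k = a" by simp
    ultimately show "x \<in> {Sq a (a+1)}" by simp
  next
    fix x assume "x \<in> {Sq a (a+1)}"
    then show "x \<in> {Sq k (k+1) | k. a \<le> k \<and> k < a + 1}" by auto
  qed
  then show ?thesis unfolding SC_def symdiff_def by simp
qed

lemma SC_2: "SC a (a+2) = {Sq a (a+1), Sq (a+1) (a+2), Sq a (a+2)}"
proof -
  have P: "PthS a (a+2) = {Sq a (a+1), Sq (a+1) (a+2)}" unfolding PthS_def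
  proof (intro set_eqI iffI)
    fix x assume "x \<in> {Sq k (k+1) | k. a \<le> k \<and> k < a + 2}"
    then obtain k where "x = Sq k (k+1)" "a \<le> k" "k < a + 2" by auto
    moreover have "k = a \<or> k = a + 1" using \<open>a \<le> k\<close> \<open>k < a + 2\<close> by arith
    ultimately have "x = Sq a (a+1) \<or> x = Sq (a+1) (a+2)" by (auto simp: numeral_2_eq_2)
    then show "x \<in> {Sq a (a+1), Sq (a+1) (a+2)}" by simp
  next
    fix x assume "x \<in> {Sq a (a+1), Sq (a+1) (a+2)}"
    then show "x \<in> {Sq k (k+1) | k. a \<le> k \<and> k < a + 2}" by auto
  qed
  have "Sq a (a+2) \<notin> {Sq a (a+1), Sq (a+1) (a+2)}" by (auto simp: Sq_eq)
  then show ?thesis unfolding SC_def P symdiff_def by auto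
qed

lemma SC_step:
  assumes ab: "a + 1 < b"
  shows "SC a (b+1) = symdiff (symdiff (symdiff {Sq a b, Sq (a+1) b, Sq (a+1) (b+1), Sq a (b+1)} (SC a b)) (SC (a+1) b)) (SC (a+1) (b+1))"
proof (intro set_eqI)
  fix x
  show "x \<in> SC a (b+1) \<longleftrightarrow> x \<in> symdiff (symdiff (symdiff {Sq a b, Sq (a+1) b, Sq (a+1) (b+1), Sq a (b+1)} (SC a b)) (SC (a+1) b)) (SC (a+1) (b+1))"
  proof (cases "isSq x")
    case True
    then obtain p q where pq: "p < q" "x = Sq p q" unfolding isSq_def by auto
    have e1: "Sq p q = Sq c d \<longleftrightarrow> p = c \<and> q = d" if "c < d" for c d using Sq_eq_lt[OF pq(1) that] .
    have l: "a < b" "a + 1 < b" "a < b + 1" "a + 1 < b + 1" using ab by auto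
    show ?thesis unfolding pq(2) SC_def symdiff_mem
      by (simp only: insert_iff singleton_iff empty_iff e1[OF l(1)] e1[OF l(2)] e1[OF l(3)] e1[OF l(4)]
          PthS_mem[OF pq(1)]) (use ab pq(1) in \<open>cases "q = p + 1"; cases "p = a"; cases "p = a + 1"; simp; arith\<close>)
  next
    case False
    have n: "x \<noteq> Sq a b" "x \<noteq> Sq (a+1) b" "x \<noteq> Sq (a+1) (b+1)" "x \<noteq> Sq a (b+1)"
      using False Sq_isSq ab by (metis add_lessD1 less_irrefl_nat add_less_cancel_right less_not_refl2)+
    have np: "x \<notin> PthS c d" for c d using False PthS_isSq by blast
    show ?thesis unfolding SC_def symdiff_mem using n np by simp
  qed
qed

lemma SC_SP:
  assumes m: "2 \<le> m"
  shows "a < b \<Longrightarrow> b < m \<Longrightarrow> SC a b \<in> SP m"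
proof (induction "b - a" arbitrary: a b rule: less_induct)
  case less
  show ?case
  proof (cases "b = a + 1")
    case True then show ?thesis using SC_1 empty_SP by simp
  next
    case False
    show ?thesis
    proof (cases "b = a + 2")
      case True
      then have "SC a b = {Sq a (a+1), Sq (a+1) (a+2), Sq a (a+2)}" using SC_2[of a] by simp
      moreover have "a + 2 < m" using True less.prems by simp
      ultimately show ?thesis using Q6_SP[OF m, of a] by simp
    next
      case False
      define b' where "b' = b - 1"
      have b': "b = b' + 1" "a + 1 < b'" using False \<open>b \<noteq> a + 1\<close> less.prems unfolding b'_def by arith+
      have Q: "{Sq a b', Sq (a+1) b', Sq (a+1) (b'+1), Sq a (b'+1)} \<in> SP m"
        using Q8_SP[OF m b'(2)] less.prems b' by simp
      have I1: "SC a b' \<in> SP m" using less.hyps[of b' a] b' less.prems by simp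
      have I2: "SC (a+1) b' \<in> SP m" using less.hyps[of b' "a+1"] b' less.prems by simp
      have I3: "SC (a+1) (b'+1) \<in> SP m" using less.hyps[of "b'+1" "a+1"] b' less.prems by simp
      show ?thesis unfolding b'(1) SC_step[OF b'(2)]
        by (intro SP_symdiff Q I1 I2 I3)
    qed
  qed
qed


lemma orth_symdiff:
  assumes "S1 \<in> orth (squares (MM m)) (cob_space (GM m))" "S2 \<in> orth (squares (MM m)) (cob_space (GM m))"
  shows "symdiff S1 S2 \<in> orth (squares (MM m)) (cob_space (GM m))"
proof -
  have sub: "symdiff S1 S2 \<subseteq> squares (MM m)" using assms symdiff_sub[of S1 S2] unfolding orth_def by blast
  have "even (card (symdiff S1 S2 \<inter> T))" if T: "T \<in> cob_space (GM m)" for T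
  proof -
    obtain W where TW: "T = coboundary (GM m) W" using T unfolding cob_space_def by blast
    have fT: "finite T" using TW cob_sub[of "GM m" W] gedges_M finite_squares finite_subset by metis
    have "even (card (S1 \<inter> T))" "even (card (S2 \<inter> T))" using assms T unfolding orth_def by blast+
    then show ?thesis by (rule even_symdiff_Int[OF fT])
  qed
  then show ?thesis unfolding orth_def using sub by blast
qed

lemma Sq_in_squares: "u < w \<Longrightarrow> w < m \<Longrightarrow> Sq u w \<in> squares (MM m)"
  unfolding squares_MM mem_Collect_eq by (rule exI[of _ u], rule exI[of _ w]) simp

definition NP :: "nat \<Rightarrow> nat set set" where
  "NP m = {Sq p q | p q. p + 2 \<le> q \<and> q < m}"

lemma NP_sub: "NP m \<subseteq> squares (MM m)"
  unfolding NP_def squares_MM by force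

lemma symdiff_cancel: "symdiff (symdiff S A) A = S"
  unfolding symdiff_def by blast

lemma SC_insert: "a + 2 \<le> b \<Longrightarrow> SC a b = insert (Sq a b) (PthS a b)"
proof -
  assume ab: "a + 2 \<le> b"
  have "Sq a b \<notin> PthS a b" using PthS_mem[of a b a b] ab by simp
  then show ?thesis unfolding SC_def symdiff_def by auto
qed

lemma PthS_NP: "PthS a b \<inter> NP m = {}"
proof -
  { fix x assume "x \<in> PthS a b" "x \<in> NP m"
    then obtain k p q where "x = Sq k (k+1)" "x = Sq p q" "p + 2 \<le> q"
      unfolding PthS_def NP_def by auto
    then have False by (auto simp: Sq_eq) }
  then show ?thesis by blast
qed

lemma base_case:
  assumes m: "2 \<le> m" and S: "S \<in> orth (squares (MM m)) (cob_space (GM m))" and e: "S \<inter> NP m = {}"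
  shows "S = {}"
proof (rule ccontr)
  assume ne: "S \<noteq> {}"
  have Ssq: "S \<subseteq> squares (MM m)" using S unfolding orth_def by blast
  have path: "\<exists>k. k + 1 < m \<and> s = Sq k (k+1)" if s: "s \<in> S" for s
  proof -
    obtain p q where pq: "s = Sq p q" "p < q" "q < m" using s Ssq unfolding squares_MM by auto
    have "s \<notin> NP m" using e s by blast
    then have "\<not> (p + 2 \<le> q)" using pq unfolding NP_def by blast
    then have "q = p + 1" using pq by arith
    then show ?thesis using pq by blast
  qed
  define K0 where "K0 = {k. k + 1 < m \<and> Sq k (k+1) \<in> S}"
  have "K0 \<noteq> {}" using ne path unfolding K0_def by blast
  define k0 where "k0 = (LEAST k. k \<in> K0)"
  have k0: "k0 \<in> K0" unfolding k0_def using \<open>K0 \<noteq> {}\<close> by (metis LeastI ex_in_conv)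
  have k0min: "k \<in> K0 \<Longrightarrow> k0 \<le> k" for k unfolding k0_def by (rule Least_le)
  have k0m: "k0 < m" "k0 + 1 < m" "Sq k0 (k0+1) \<in> S" using k0 unfolding K0_def by auto
  define T where "T = coboundary (GM m) {Vx m k0}"
  have Tc: "T \<in> cob_space (GM m)" unfolding T_def
    by (rule single_cob_space) (simp add: gverts_M[OF m] k0m(1))
  have Teq: "T = {s \<in> squares (MM m). odd (ginc (GM m) s (Vx m k0))}"
    unfolding T_def cob_single gedges_M ..
  have "S \<inter> T = {Sq k0 (k0+1)}"
  proof (intro set_eqI iffI)
    fix s assume s: "s \<in> S \<inter> T"
    then obtain k where k: "k + 1 < m" "s = Sq k (k+1)" using path by blast
    have "odd (ginc (GM m) s (Vx m k0))" using s Teq by blast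
    moreover have "ginc (GM m) s (Vx m k0) = (if k0 = k \<or> k0 = k + 1 then 1 else 0)"
      using ginc_M[of k m "k+1" k0] k k0m by simp
    ultimately have "k0 = k \<or> k0 = k + 1" by (auto split: if_splits)
    moreover have "k \<in> K0" using k s unfolding K0_def by blast
    ultimately have "k0 = k" using k0min[of k] by arith
    then show "s \<in> {Sq k0 (k0+1)}" using k by simp
  next
    fix s assume "s \<in> {Sq k0 (k0+1)}"
    then have s: "s = Sq k0 (k0+1)" by simp
    have "ginc (GM m) s (Vx m k0) = 1" using ginc_M[of k0 m "k0+1" k0] k0m s by simp
    moreover have "s \<in> squares (MM m)" using s k0m Sq_in_squares[of k0 "k0+1" m] by simp
    ultimately show "s \<in> S \<inter> T" using Teq s k0m by simp
  qed
  then have "odd (card (S \<inter> T))" by simp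
  moreover have "even (card (S \<inter> T))" using S Tc unfolding orth_def by blast
  ultimately show False by simp
qed

lemma orth_sub_SP:
  assumes m: "2 \<le> m"
  shows "S \<in> orth (squares (MM m)) (cob_space (GM m)) \<Longrightarrow> S \<in> SP m"
proof (induction "card (S \<inter> NP m)" arbitrary: S rule: less_induct)
  case less
  show ?case
  proof (cases "S \<inter> NP m = {}")
    case True
    then show ?thesis using base_case[OF m less.prems] empty_SP by simp
  next
    case False
    then obtain x where x: "x \<in> S" "x \<in> NP m" by blast
    then obtain a b where ab: "x = Sq a b" "a + 2 \<le> b" "b < m" unfolding NP_def by blast
    have SCs: "SC a b \<in> SP m" using SC_SP[OF m, of a b] ab by simp
    have SCo: "SC a b \<in> orth (squares (MM m)) (cob_space (GM m))" using FZ_sub_orth[OF m] SCs by blast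
    define S' where "S' = symdiff S (SC a b)"
    have S'o: "S' \<in> orth (squares (MM m)) (cob_space (GM m))" unfolding S'_def
      by (rule orth_symdiff[OF less.prems SCo])
    have "S' \<inter> NP m = (S \<inter> NP m) - {x}"
    proof (intro set_eqI)
      fix y
      have "y \<in> SC a b \<inter> NP m \<longleftrightarrow> y = x"
        using SC_insert[OF ab(2)] PthS_NP[of a b m] x(2) ab(1) by blast
      then show "y \<in> S' \<inter> NP m \<longleftrightarrow> y \<in> (S \<inter> NP m) - {x}"
        unfolding S'_def using x by (auto simp: symdiff_mem)
    qed
    moreover have "finite (S \<inter> NP m)" using NP_sub finite_squares finite_subset by (metis inf_le2)
    moreover have "x \<in> S \<inter> NP m" using x by simp
    ultimately have "card (S' \<inter> NP m) < card (S \<inter> NP m)"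
      using card_Diff1_less by metis
    then have "S' \<in> SP m" using less.hyps S'o by blast
    then have "symdiff S' (SC a b) \<in> SP m" using SP_symdiff SCs by blast
    then show ?thesis unfolding S'_def symdiff_cancel .
  qed
qed

lemma rich_MM:
  assumes m: "2 \<le> m"
  shows "rich (MM m)"
  unfolding rich_def
proof (intro conjI)
  show "is_map (MM m)" by (rule is_map_MM[OF m])
  show "orth (squares (MM m)) (cob_space (GM m)) = SP m"
    using FZ_sub_orth[OF m] orth_sub_SP[OF m] by blast
qed

theorem theorem2p11:
  fixes n :: nat
  assumes "n \<ge> 1"
  shows "map_rich (complete_graph (2 * n))"
  unfolding map_rich_def
proof (intro exI conjI)
  have m: "2 \<le> 2 * n" using assms by simp
  show "rich (MM (2 * n))" by (rule rich_MM[OF m])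
  show "mgraph_iso (complete_graph (2 * n)) (Gof (MM (2 * n)))" by (rule iso_M[OF m])
qed


end
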